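(* Under the standing assumptions of the context, for every integer $\ell\ge1$ the limits $\lambda_\ell(x,\infty,1/2)$ and $\Lambda_\ell(x,\infty,1/2)$ exist and \[ \lambda_\ell(x,\infty,1/2)=d(\mathcal K_\ell),\qquad \Lambda_\ell(x,\infty,1/2)=\sum_{l=\ell}^\infty d(\mathcal K_l)>0; \] moreover, $d(\mathcal K_\ell)>0$ for infinitely many $\ell$.
   Context: Standing assumptions: $A=\{0,1\}$, $\Sigma=A^{\mathbb N_0}$ with metric $\rho(y,z)=2^{-\min\{i\ge0:\,y_i\ne z_i\}}$ ($y\ne z$) and shift $\sigma$. $\zeta:A\to A^*$ is a binary substitution of constant length $q\ge2$, primitive, aperiodic (its subshift $X_\zeta$ contains a non-$\sigma$-periodic sequence), with $\zeta(0)$ starting with $0$; $x=\lim_k\zeta^k(0)$ its fixed point starting with $0$. For $n\in\mathbb N\cup\{\infty\}$, $n\ge2$, the recurrence plot $R(x,n,1/2)$ has indices $0\le i,j<n$ and entry $1$ iff $x_i=x_j$. A line of length $\ell$: $(i,j,\ell)$ with $0\le i,j\le n-\ell$, $i\ne j$, entries $(i+k,j+k)=1$ for $0\le k<\ell$, entry $(i-1,j-1)=0$ if $\min\{i,j\}>0$, entry $(i+\ell,j+\ell)=0$ if $\max\{i,j\}<n-\ell$; for $n=\infty$ it is inner if $\min\{i,j\}>0$. For finite $n$: $N_\ell$ = number of all lines of length exactly $\ell$, $\lambda_\ell(x,n,1/2)=N_\ell/(n^2-n)$, $\Lambda_\ell=\sum_{l\ge\ell}\lambda_l$; values at $n=\infty$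 are limits as $n\to\infty$. $\mathcal K_l=\{(i,j)\in\mathbb N^2:(i,j,l)\text{ inner line in }R(x,\infty,1/2)\}$; $d(M)=\lim_n n^{-2}\#(M\cap[0,n)^2)$, known to exist for $M=\mathcal K_l$. *)

theory Defs
  imports Complex_Main
begin

text \<open>Alphabet A = {0,1} represented inside nat; sequences are nat \<Rightarrow> nat.\<close>

definition subst_word :: "(nat \<Rightarrow> nat list) \<Rightarrow> nat list \<Rightarrow> nat list" where
  "subst_word \<zeta> w = concat (map \<zeta> w)"

definition subst_iter :: "(nat \<Rightarrow> nat list) \<Rightarrow> nat \<Rightarrow> nat \<Rightarrow> nat list" where
  "subst_iter \<zeta> k a = (subst_word \<zeta> ^^ k) [a]"

definition binary_const_length :: "(nat \<Rightarrow> nat list) \<Rightarrow> nat \<Rightarrow> bool" where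
  "binary_const_length \<zeta> q \<longleftrightarrow> q \<ge> 2 \<and>
     (\<forall>a\<in>{0,1}. length (\<zeta> a) = q \<and> set (\<zeta> a) \<subseteq> {0,1})"

definition primitive_subst :: "(nat \<Rightarrow> nat list) \<Rightarrow> bool" where
  "primitive_subst \<zeta> \<longleftrightarrow> (\<exists>k>0. \<forall>a\<in>{0,1}. \<forall>b\<in>{0,1}. b \<in> set (subst_iter \<zeta> k a))"

definition is_factor :: "'a list \<Rightarrow> 'a list \<Rightarrow> bool" where
  "is_factor u w \<longleftrightarrow> (\<exists>p s. w = p @ u @ s)"

definition subst_lang :: "(nat \<Rightarrow> nat list) \<Rightarrow> nat list set" where
  "subst_lang \<zeta> = {u. \<exists>k a. a \<in> {0,1} \<and> is_factor u (subst_iter \<zeta> k a)}"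

definition subshift :: "(nat \<Rightarrow> nat list) \<Rightarrow> (nat \<Rightarrow> nat) set" where
  "subshift \<zeta> = {y. (\<forall>i. y i \<in> {0,1}) \<and> (\<forall>i n. map y [i..<i+n] \<in> subst_lang \<zeta>)}"

definition shift_periodic :: "(nat \<Rightarrow> nat) \<Rightarrow> bool" where
  "shift_periodic y \<longleftrightarrow> (\<exists>p>0. \<forall>i. y (i + p) = y i)"

definition aperiodic_subst :: "(nat \<Rightarrow> nat list) \<Rightarrow> bool" where
  "aperiodic_subst \<zeta> \<longleftrightarrow> (\<exists>y\<in>subshift \<zeta>. \<not> shift_periodic y)"

text \<open>x = lim_k zeta^k(0) in the product (rho) topology: every coordinate eventually stabilises\<close>
definition is_fixed_point_limit :: "(nat \<Rightarrow> nat list) \<Rightarrow> (nat \<Rightarrow> nat) \<Rightarrow> bool" where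
  "is_fixed_point_limit \<zeta> x \<longleftrightarrow>
     (\<forall>i. \<exists>K. \<forall>k\<ge>K. i < length (subst_iter \<zeta> k 0) \<and> subst_iter \<zeta> k 0 ! i = x i)"

definition rp_line :: "(nat \<Rightarrow> nat) \<Rightarrow> nat \<Rightarrow> nat \<Rightarrow> nat \<Rightarrow> nat \<Rightarrow> bool" where
  "rp_line x n i j l \<longleftrightarrow> 1 \<le> l \<and> l \<le> n \<and> i \<le> n - l \<and> j \<le> n - l \<and> i \<noteq> j \<and>
     (\<forall>k<l. x (i + k) = x (j + k)) \<and>
     (0 < min i j \<longrightarrow> x (i - 1) \<noteq> x (j - 1)) \<and>
     (max i j < n - l \<longrightarrow> x (i + l) \<noteq> x (j + l))"

definition num_lines :: "(nat \<Rightarrow> nat) \<Rightarrow> nat \<Rightarrow> nat \<Rightarrow> nat" where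
  "num_lines x n l = card {(i, j). rp_line x n i j l}"

definition rp_lambda :: "(nat \<Rightarrow> nat) \<Rightarrow> nat \<Rightarrow> nat \<Rightarrow> real" where
  "rp_lambda x l n = real (num_lines x n l) / (real n ^ 2 - real n)"

text \<open>Lambda_l(x,n,1/2) = sum over l' \<ge> l (lines have length at most n)\<close>
definition rp_Lambda :: "(nat \<Rightarrow> nat) \<Rightarrow> nat \<Rightarrow> nat \<Rightarrow> real" where
  "rp_Lambda x l n = (\<Sum>m\<in>{l..n}. rp_lambda x m n)"

definition inner_line :: "(nat \<Rightarrow> nat) \<Rightarrow> nat \<Rightarrow> nat \<Rightarrow> nat \<Rightarrow> bool" where
  "inner_line x i j l \<longleftrightarrow> 1 \<le> l \<and> 0 < i \<and> 0 < j \<and> i \<noteq> j \<and>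
     (\<forall>k<l. x (i + k) = x (j + k)) \<and>
     x (i - 1) \<noteq> x (j - 1) \<and> x (i + l) \<noteq> x (j + l)"

definition K_set :: "(nat \<Rightarrow> nat) \<Rightarrow> nat \<Rightarrow> (nat \<times> nat) set" where
  "K_set x l = {(i, j). inner_line x i j l}"

definition density2 :: "(nat \<times> nat) set \<Rightarrow> real" where
  "density2 M = lim (\<lambda>n. real (card (M \<inter> ({..<n} \<times> {..<n}))) / real n ^ 2)"

end

theory Submission
  imports Defs "HOL-Real_Asymp.Real_Asymp"
begin

lemma funpow_subst_concat:
  "(subst_word z ^^ k) xs = concat (map (\<lambda>c. (subst_word z ^^ k) [c]) xs)"
proof (induction k arbitrary: xs)
  case 0 then show ?case by (induction xs) auto
next
  case (Suc k)
  have "(subst_word z ^^ Suc k) xs = subst_word z ((subst_word z ^^ k) xs)" by simp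
  also have "\<dots> = subst_word z (concat (map (\<lambda>c. (subst_word z ^^ k) [c]) xs))" using Suc by metis
  also have "\<dots> = concat (map (\<lambda>c. subst_word z ((subst_word z ^^ k) [c])) xs)"
    by (induction xs) (auto simp: subst_word_def)
  finally show ?case by simp
qed

lemma subst_iter_add:
  "subst_iter z (k + K) a = concat (map (subst_iter z k) (subst_iter z K a))"
proof -
  have "subst_iter z (k + K) a = (subst_word z ^^ k) ((subst_word z ^^ K) [a])"
    by (simp add: subst_iter_def funpow_add)
  also have "\<dots> = concat (map (subst_iter z k) (subst_iter z K a))"
    by (subst funpow_subst_concat) (simp add: subst_iter_def[abs_def])
  finally show ?thesis .
qed

lemma subst_iter_0[simp]: "subst_iter z 0 a = [a]" by (simp add: subst_iter_def)
lemma subst_iter_1[simp]: "subst_iter z (Suc 0) a = z a" by (simp add: subst_iter_def subst_word_def)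

lemma subst_iter_Suc: "subst_iter z (Suc k) a = concat (map (subst_iter z k) (z a))"
  using subst_iter_add[of z k 1 a] by simp

lemma length_concat_const:
  assumes "\<forall>y\<in>set ys. length (g y) = Q"
  shows "length (concat (map g ys)) = length ys * Q"
  using assms by (induction ys) auto

lemma nth_concat_const:
  assumes "\<forall>y\<in>set ys. length (g y) = Q" "i < length ys" "r < Q"
  shows "concat (map g ys) ! (Q * i + r) = g (ys ! i) ! r"
  using assms
proof (induction ys arbitrary: i)
  case Nil then show ?case by simp
next
  case (Cons y ys)
  show ?case
  proof (cases i)
    case 0 then show ?thesis using Cons by (simp add: nth_append)
  next
    case (Suc j)
    have "Q * i + r = Q + (Q * j + r)" using Suc by simp
    then show ?thesis using Cons Suc by (simp add: nth_append)
  qed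
qed

locale rp =
  fixes \<zeta> :: "nat \<Rightarrow> nat list" and q :: nat and x :: "nat \<Rightarrow> nat"
  assumes bcl: "binary_const_length \<zeta> q"
    and prim: "primitive_subst \<zeta>"
    and aper: "aperiodic_subst \<zeta>"
    and z00: "\<zeta> 0 ! 0 = 0"
    and fp: "is_fixed_point_limit \<zeta> x"
begin

abbreviation S where "S \<equiv> subst_iter \<zeta>"

lemma q2: "q \<ge> 2" using bcl by (simp add: binary_const_length_def)
lemma lenz: "a \<in> {0,1} \<Longrightarrow> length (\<zeta> a) = q" using bcl by (auto simp: binary_const_length_def)
lemma setz: "a \<in> {0,1} \<Longrightarrow> set (\<zeta> a) \<subseteq> {0,1}" using bcl by (auto simp: binary_const_length_def)

lemma S_props: "a \<in> {0,1} \<Longrightarrow> length (S k a) = q ^ k \<and> set (S k a) \<subseteq> {0,1}"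
proof (induction k arbitrary: a)
  case 0 then show ?case by simp
next
  case (Suc k)
  have "length (S (Suc k) a) = length (\<zeta> a) * q ^ k"
    unfolding subst_iter_Suc
  proof (rule length_concat_const, intro ballI)
    fix y assume "y \<in> set (\<zeta> a)"
    then have "y \<in> {0,1}" using setz[OF Suc.prems] by blast
    then show "length (S k y) = q ^ k" using Suc.IH by blast
  qed
  moreover have "set (S (Suc k) a) \<subseteq> {0,1}"
  proof
    fix c assume "c \<in> set (S (Suc k) a)"
    then obtain y where y: "y \<in> set (\<zeta> a)" "c \<in> set (S k y)" unfolding subst_iter_Suc by auto
    then have "y \<in> {0,1}" using setz[OF Suc.prems] by blast
    then show "c \<in> {0,1}" using Suc.IH y by blast
  qed
  ultimately show ?case using lenz[OF Suc.prems] by simp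
qed

lemma lt_pow: "n < q ^ n"
proof (induction n)
  case 0 then show ?case by simp
next
  case (Suc n)
  have "Suc n < 2 * q ^ n" using Suc by linarith
  also have "\<dots> \<le> q * q ^ n" using q2 by (intro mult_le_mono1)
  finally show ?case by simp
qed

lemma lenS: "a \<in> {0,1} \<Longrightarrow> length (S k a) = q ^ k" using S_props by blast
lemma setS: "a \<in> {0,1} \<Longrightarrow> set (S k a) \<subseteq> {0,1}" using S_props by blast

lemma z0_cons: "\<zeta> 0 = 0 # tl (\<zeta> 0)"
proof -
  have "\<zeta> 0 \<noteq> []" using lenz[of 0] q2 by auto
  then show ?thesis using z00 by (cases "\<zeta> 0") auto
qed

lemma S_prefix_Suc: "i < q ^ k \<Longrightarrow> S (Suc k) 0 ! i = S k 0 ! i"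
  using lenS[of 0 k] by (subst subst_iter_Suc, subst z0_cons) (simp add: nth_append)

lemma S_prefix: "k \<le> K \<Longrightarrow> i < q ^ k \<Longrightarrow> S K 0 ! i = S k 0 ! i"
proof (induction K rule: dec_induct)
  case base then show ?case by simp
next
  case (step K)
  have "q ^ k \<le> q ^ K" using step q2 by (simp add: power_increasing)
  then show ?case using step S_prefix_Suc[of i K] by simp
qed

lemma x_prefix: "i < q ^ k \<Longrightarrow> x i = S k 0 ! i"
proof -
  assume i: "i < q ^ k"
  obtain K where K: "\<forall>k'\<ge>K. i < length (S k' 0) \<and> S k' 0 ! i = x i"
    using fp unfolding is_fixed_point_limit_def by blast
  have "S (max k K) 0 ! i = x i" using K[rule_format, of "max k K"] by simp
  moreover have "S (max k K) 0 ! i = S k 0 ! i" using S_prefix[of k "max k K" i] i by simp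
  ultimately show ?thesis by simp
qed

lemma x01: "x i \<in> {0,1}"
proof -
  have "i < q ^ i" by (rule lt_pow)
  then have "x i = S i 0 ! i" by (rule x_prefix)
  then show ?thesis using setS[of 0 i] lenS[of 0 i] \<open>i < q ^ i\<close> by (metis insertI1 nth_mem subsetD)
qed

lemma x_block: "r < q ^ k \<Longrightarrow> x (q ^ k * m + r) = S k (x m) ! r"
proof -
  assume r: "r < q ^ k"
  have mK: "m < q ^ m" by (rule lt_pow)
  have "q ^ k * m + r < q ^ k * (m + 1)" using r by simp
  also have "\<dots> \<le> q ^ k * q ^ m" using mK by (intro mult_le_mono2) simp
  finally have lt: "q ^ k * m + r < q ^ (k + m)" by (simp add: power_add)
  have "x (q ^ k * m + r) = S (k + m) 0 ! (q ^ k * m + r)" using x_prefix[OF lt] .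
  also have "\<dots> = concat (map (S k) (S m 0)) ! (q ^ k * m + r)" by (simp add: subst_iter_add)
  also have "\<dots> = S k (S m 0 ! m) ! r"
    by (rule nth_concat_const) (use setS[of 0 m] lenS lenS[of 0 m] mK r in auto)
  also have "S m 0 ! m = x m" using x_prefix[OF mK] by simp
  finally show ?thesis .
qed

end

definition cnt :: "(nat \<Rightarrow> bool) \<Rightarrow> nat \<Rightarrow> nat" where
  "cnt P n = card {i. i < n \<and> P i}"

lemma cnt_le: "cnt P n \<le> n"
proof -
  have "{i. i < n \<and> P i} \<subseteq> {..<n}" by auto
  then show ?thesis unfolding cnt_def by (metis card_lessThan card_mono finite_lessThan)
qed

lemma cnt_mono: "n \<le> n' \<Longrightarrow> cnt P n \<le> cnt P n' \<and> cnt P n' \<le> cnt P n + (n' - n)"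
proof -
  assume nn: "n \<le> n'"
  have un: "{i. i < n' \<and> P i} = {i. i < n \<and> P i} \<union> {i. n \<le> i \<and> i < n' \<and> P i}" using nn by auto
  have c2: "card {i. n \<le> i \<and> i < n' \<and> P i} \<le> n' - n"
  proof -
    have "{i. n \<le> i \<and> i < n' \<and> P i} \<subseteq> {n..<n'}" by auto
    then show ?thesis by (metis card_atLeastLessThan card_mono finite_atLeastLessThan)
  qed
  have "card {i. i < n' \<and> P i} = card {i. i < n \<and> P i} + card {i. n \<le> i \<and> i < n' \<and> P i}"
    unfolding un by (rule card_Un_disjoint) auto
  then show ?thesis using c2 unfolding cnt_def by simp
qed

lemma block_split: "card {i. i < (Q::nat) * M \<and> P i} = (\<Sum>m<M. card {r. r < Q \<and> P (Q * m + r)})"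
proof (induction M)
  case 0 then show ?case by simp
next
  case (Suc M)
  have un: "{i. i < Q * Suc M \<and> P i} = {i. i < Q * M \<and> P i} \<union> (\<lambda>r. Q * M + r) ` {r. r < Q \<and> P (Q * M + r)}"
  proof (rule set_eqI, rule iffI)
    fix i assume "i \<in> {i. i < Q * Suc M \<and> P i}"
    then show "i \<in> {i. i < Q * M \<and> P i} \<union> (\<lambda>r. Q * M + r) ` {r. r < Q \<and> P (Q * M + r)}"
      by (cases "i < Q * M") (auto intro!: image_eqI[of _ _ "i - Q * M"])
  qed auto
  have "card {i. i < Q * Suc M \<and> P i} = card {i. i < Q * M \<and> P i} + card ((\<lambda>r. Q * M + r) ` {r. r < Q \<and> P (Q * M + r)})"
    unfolding un by (rule card_Un_disjoint) auto
  also have "card ((\<lambda>r. Q * M + r) ` {r. r < Q \<and> P (Q * M + r)}) = card {r. r < Q \<and> P (Q * M + r)}"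
    by (rule card_image) (simp add: inj_on_def)
  finally show ?case using Suc by simp
qed

lemma cnt_block_approx:
  assumes Q: "Q > 0" and n: "n \<ge> Q"
  shows "\<bar>real (cnt P n) / real n - real (cnt P (Q * (n div Q))) / real (Q * (n div Q))\<bar> \<le> 2 * real Q / real n"
proof -
  define M where "M = n div Q"
  define A where "A = Q * M"
  have "Q div Q \<le> n div Q" by (rule div_le_mono[OF n])
  then have M1: "M \<ge> 1" using Q unfolding M_def by simp
  have A0: "A > 0" using M1 Q unfolding A_def by simp
  have An: "A \<le> n" unfolding A_def M_def by simp
  have "n - A = n mod Q" unfolding A_def M_def by (rule minus_mult_div_eq_mod)
  then have nA: "n - A < Q" using mod_less_divisor[OF Q] by simp
  define a where "a = cnt P A"
  define e where "e = cnt P n - a"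
  have cm: "cnt P A \<le> cnt P n \<and> cnt P n \<le> cnt P A + (n - A)" using cnt_mono[OF An] .
  have e': "cnt P n = a + e" using cm unfolding a_def e_def by simp
  have ea: "e \<le> n - A" using cm unfolding a_def e_def by linarith
  have aA: "a \<le> A" unfolding a_def by (rule cnt_le)
  define r where "r = n - A"
  have nr: "n = A + r" using An unfolding r_def by simp
  have rQ: "real r \<le> real Q" "real e \<le> real r" using nA ea unfolding r_def by auto
  have n0: "real n > 0" using A0 nr by simp
  have eq: "real (cnt P n) / real n - real a / real A = (real A * real e - real a * real r) / (real A * real n)"
  proof -
    have c: "real (cnt P n) = real a + real e" using e' by simp
    have nn: "real n = real A + real r" using nr by simp
    have p: "real A + real r > 0" "real A > 0" using A0 by auto
    show ?thesis unfolding c nn using p by (simp add: field_simps)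
  qed
  have b1: "real A * real e \<le> real A * real Q" using rQ by (intro mult_left_mono) auto
  have b2: "real a * real r \<le> real A * real Q" using aA rQ by (intro mult_mono) auto
  have nb: "\<bar>real A * real e - real a * real r\<bar> \<le> 2 * real A * real Q"
  proof -
    have "real A * real e \<ge> 0" "real a * real r \<ge> 0" by auto
    then show ?thesis using b1 b2 unfolding abs_le_iff by linarith
  qed
  have pos: "real A * real n > 0" using A0 n0 by simp
  have "\<bar>real (cnt P n) / real n - real a / real A\<bar> = \<bar>real A * real e - real a * real r\<bar> / (real A * real n)"
    unfolding eq using pos by (simp add: abs_div)
  also have "\<dots> \<le> (2 * real A * real Q) / (real A * real n)"
    using nb pos by (rule divide_right_mono[OF _ less_imp_le])
  also have "\<dots> = 2 * real Q / real n" using A0 by simp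
  finally show ?thesis unfolding a_def A_def M_def by simp
qed


lemma conv_approx:
  fixes f :: "nat \<Rightarrow> real"
  assumes "\<And>e. e > 0 \<Longrightarrow> \<exists>N c. \<forall>n\<ge>N. \<bar>f n - c\<bar> < e"
  shows "convergent f"
proof -
  have "Cauchy f"
  proof (rule CauchyI)
    fix e :: real assume e: "e > 0"
    obtain N c where Nc: "\<forall>n\<ge>N. \<bar>f n - c\<bar> < e / 2" using assms[of "e/2"] e by auto
    show "\<exists>M. \<forall>m\<ge>M. \<forall>n\<ge>M. norm (f m - f n) < e"
    proof (intro exI allI impI)
      fix m n assume "m \<ge> N" "n \<ge> N"
      then have "\<bar>f m - c\<bar> < e/2" "\<bar>f n - c\<bar> < e/2" using Nc by auto
      then show "norm (f m - f n) < e" unfolding real_norm_def by linarith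
    qed
  qed
  then show ?thesis by (simp add: Cauchy_convergent_iff)
qed

lemma sum01:
  fixes g :: "nat \<Rightarrow> 'b::comm_ring_1"
  assumes "finite T" "\<forall>t\<in>T. h t \<in> {0,1}"
  shows "(\<Sum>t\<in>T. g (h t)) = of_nat (card {t\<in>T. h t = 0}) * g 0 + of_nat (card {t\<in>T. h t \<noteq> 0}) * g 1"
proof -
  have "(\<Sum>t\<in>T. g (h t)) = (\<Sum>t\<in>T. if h t = 0 then g 0 else g 1)"
    using assms(2) by (intro sum.cong) auto
  also have "\<dots> = sum (\<lambda>_. g 0) (T \<inter> {t. h t = 0}) + sum (\<lambda>_. g 1) (T \<inter> - {t. h t = 0})"
    by (rule sum.If_cases) (rule assms(1))
  also have "T \<inter> {t. h t = 0} = {t\<in>T. h t = 0}" by auto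
  also have "T \<inter> - {t. h t = 0} = {t\<in>T. h t \<noteq> 0}" by auto
  finally show ?thesis by (simp add: mult.commute)
qed

context rp begin

lemma subst_iter_one: "S 1 a = \<zeta> a" by (simp add: subst_iter_def subst_word_def)

definition z :: "nat \<Rightarrow> nat \<Rightarrow> nat" where
  "z k b = card {r. r < q ^ k \<and> S k b ! r = 0}"

lemma z_le: "z k b \<le> q ^ k"
proof -
  have "{r. r < q ^ k \<and> S k b ! r = 0} \<subseteq> {..<q^k}" by auto
  then show ?thesis unfolding z_def by (metis card_lessThan card_mono finite_lessThan)
qed

lemma card_compl_lt: "card {t. t < n \<and> P t} + card {t. t < n \<and> \<not> P t} = n"
proof -
  have "card {t. t < n \<and> P t} + card {t. t < n \<and> \<not> P t} = card ({t. t < n \<and> P t} \<union> {t. t < n \<and> \<not> P t})"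
    by (rule card_Un_disjoint[symmetric]) auto
  also have "{t. t < n \<and> P t} \<union> {t. t < n \<and> \<not> P t} = {..<n}" by auto
  finally show ?thesis by simp
qed

lemma zSuc:
  assumes b: "b \<in> {0,1}"
  shows "real (z (Suc k) b) = real (z 1 b) * real (z k 0) + (real q - real (z 1 b)) * real (z k 1)"
proof -
  have len: "\<forall>y\<in>set (\<zeta> b). length (S k y) = q ^ k"
    using setz[OF b] lenS by blast
  have lz: "length (\<zeta> b) = q" using lenz[OF b] .
  have "z (Suc k) b = card {r. r < q ^ k * q \<and> concat (map (S k) (\<zeta> b)) ! r = 0}"
    unfolding z_def subst_iter_Suc by (simp add: mult.commute)
  also have "\<dots> = (\<Sum>t<q. card {s. s < q ^ k \<and> concat (map (S k) (\<zeta> b)) ! (q ^ k * t + s) = 0})"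
    by (rule block_split)
  also have "\<dots> = (\<Sum>t<q. z k (\<zeta> b ! t))"
  proof (rule sum.cong)
    fix t assume t: "t \<in> {..<q}"
    have "{s. s < q ^ k \<and> concat (map (S k) (\<zeta> b)) ! (q ^ k * t + s) = 0} = {s. s < q ^ k \<and> S k (\<zeta> b ! t) ! s = 0}"
      using nth_concat_const[OF len] t lz by auto
    then show "card {s. s < q ^ k \<and> concat (map (S k) (\<zeta> b)) ! (q ^ k * t + s) = 0} = z k (\<zeta> b ! t)"
      unfolding z_def by simp
  qed simp
  finally have e1: "real (z (Suc k) b) = (\<Sum>t<q. real (z k (\<zeta> b ! t)))" by simp
  have h01: "\<forall>t\<in>{..<q}. \<zeta> b ! t \<in> {0,1}" using setz[OF b] lz by (auto intro: nth_mem)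
  have "(\<Sum>t<q. real (z k (\<zeta> b ! t))) = real (card {t\<in>{..<q}. \<zeta> b ! t = 0}) * real (z k 0) + real (card {t\<in>{..<q}. \<zeta> b ! t \<noteq> 0}) * real (z k 1)"
    using sum01[of "{..<q}" "\<lambda>t. \<zeta> b ! t" "\<lambda>c. real (z k c)"] h01 by simp
  moreover have "card {t\<in>{..<q}. \<zeta> b ! t = 0} = z 1 b" unfolding z_def subst_iter_one by simp
  moreover have "card {t\<in>{..<q}. \<zeta> b ! t \<noteq> 0} = q - z 1 b"
    using card_compl_lt[of q "\<lambda>t. \<zeta> b ! t = 0"] unfolding z_def subst_iter_one by simp
  moreover have "z 1 b \<le> q" using z_le[of 1 b] by simp
  ultimately show ?thesis using e1 by (simp add: of_nat_diff)
qed

lemma zdiff: "real (z k 0) - real (z k 1) = (real (z 1 0) - real (z 1 1)) ^ k"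
proof (induction k)
  case 0
  have "{r. r < q ^ 0 \<and> S 0 0 ! r = 0} = {0}" by (auto simp: less_one)
  then have "z 0 0 = 1" unfolding z_def by simp
  moreover have "{r. r < q ^ 0 \<and> S 0 1 ! r = 0} = {}"
  proof -
    have "r < q ^ 0 \<Longrightarrow> S 0 1 ! r \<noteq> 0" for r
    proof -
      assume "r < q ^ 0" then have "r = 0" by simp
      then show ?thesis by simp
    qed
    then show ?thesis by blast
  qed
  then have "z 0 1 = 0" unfolding z_def by simp
  ultimately show ?case by simp
next
  case (Suc k)
  have "real (z (Suc k) 0) - real (z (Suc k) 1) = (real (z 1 0) - real (z 1 1)) * (real (z k 0) - real (z k 1))"
    using zSuc[of 0 k] zSuc[of 1 k] by (simp add: algebra_simps)
  then show ?case using Suc by simp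
qed

lemma z10_pos: "z 1 0 \<ge> 1"
proof -
  have "0 < q" using q2 by simp
  then have "0 \<in> {r. r < q \<and> \<zeta> 0 ! r = 0}" using z00 by simp
  then have "{r. r < q \<and> \<zeta> 0 ! r = 0} \<noteq> {}" by blast
  moreover have "finite {r. r < q \<and> \<zeta> 0 ! r = 0}" by simp
  ultimately show ?thesis unfolding z_def subst_iter_one by (simp add: Suc_leI card_gt_0_iff)
qed

lemma z10_lt: "z 1 0 < q"
proof (rule ccontr)
  assume "\<not> z 1 0 < q"
  then have eq: "card {r. r < q \<and> \<zeta> 0 ! r = 0} = q" using z_le[of 1 0] unfolding z_def subst_iter_one by simp
  have "{r. r < q \<and> \<zeta> 0 ! r = 0} = {..<q}"
    by (rule card_subset_eq) (use eq in auto)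
  then have all0: "\<forall>t<q. \<zeta> 0 ! t = 0" by auto
  then have sz: "set (\<zeta> 0) \<subseteq> {0}" using lenz[of 0] by (auto simp: in_set_conv_nth)
  have "set (S k 0) \<subseteq> {0}" for k
  proof (induction k)
    case 0 then show ?case by simp
  next
    case (Suc k) then show ?case using sz unfolding subst_iter_Suc by auto
  qed
  moreover obtain k where "1 \<in> set (S k 0)" using prim unfolding primitive_subst_def by blast
  ultimately show False by auto
qed

definition rho where "rho = \<bar>real (z 1 0) - real (z 1 1)\<bar> / real q"

lemma rho: "rho \<ge> 0" "rho < 1"
proof -
  show "rho \<ge> 0" unfolding rho_def by simp
  have "z 1 1 \<le> q" using z_le[of 1 1] by simp
  then have "\<bar>real (z 1 0) - real (z 1 1)\<bar> < real q" using z10_pos z10_lt by (simp add: abs_less_iff)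
  then show "rho < 1" unfolding rho_def using q2 by simp
qed

lemma zdiff_bound: "\<bar>real (z k 0) - real (z k 1)\<bar> / real (q ^ k) = rho ^ k"
proof -
  have "rho ^ k = \<bar>real (z 1 0) - real (z 1 1)\<bar> ^ k / real q ^ k" unfolding rho_def by (simp add: power_divide)
  moreover have "\<bar>real (z k 0) - real (z k 1)\<bar> = \<bar>real (z 1 0) - real (z 1 1)\<bar> ^ k" by (simp only: zdiff[of k] power_abs)
  ultimately show ?thesis by simp
qed

lemma cnt0_block: "cnt (\<lambda>i. x i = 0) (q ^ k * M) = (\<Sum>m<M. z k (x m))"
  unfolding cnt_def block_split
proof (rule sum.cong)
  fix m assume "m \<in> {..<M}"
  have "{r. r < q ^ k \<and> x (q ^ k * m + r) = 0} = {r. r < q ^ k \<and> S k (x m) ! r = 0}"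
    using x_block by auto
  then show "card {r. r < q ^ k \<and> x (q ^ k * m + r) = 0} = z k (x m)" unfolding z_def by simp
qed simp

lemma sum_x01:
  fixes g :: "nat \<Rightarrow> real"
  shows "(\<Sum>m<M. g (x m)) = real (cnt (\<lambda>i. x i = 0) M) * g 0 + (real M - real (cnt (\<lambda>i. x i = 0) M)) * g 1"
proof -
  have "(\<Sum>m<M. g (x m)) = real (card {t\<in>{..<M}. x t = 0}) * g 0 + real (card {t\<in>{..<M}. x t \<noteq> 0}) * g 1"
    using sum01[of "{..<M}" x g] x01 by simp
  moreover have "card {t\<in>{..<M}. x t \<noteq> 0} = M - cnt (\<lambda>i. x i = 0) M"
    using card_compl_lt[of M "\<lambda>t. x t = 0"] unfolding cnt_def by simp
  moreover have "cnt (\<lambda>i. x i = 0) M \<le> M" by (rule cnt_le)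
  moreover have "card {t\<in>{..<M}. x t = 0} = cnt (\<lambda>i. x i = 0) M" unfolding cnt_def by simp
  ultimately show ?thesis by (simp add: of_nat_diff)
qed

lemma letter_freq_conv: "convergent (\<lambda>n. real (cnt (\<lambda>i. x i = 0) n) / real n)"
proof (rule conv_approx)
  fix e :: real assume e: "e > 0"
  obtain k where k: "rho ^ k < e / 2" using real_arch_pow_inv[of "e/2" rho] rho e by auto
  define Q where "Q = q ^ k"
  have Q0: "Q > 0" unfolding Q_def using q2 by simp
  obtain N0 :: nat where N0: "4 * real Q / e < real N0" using reals_Archimedean2 by blast
  define N where "N = max Q N0"
  define c where "c = real (z k 0) / real Q"
  show "\<exists>N c. \<forall>n\<ge>N. \<bar>real (cnt (\<lambda>i. x i = 0) n) / real n - c\<bar> < e"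
  proof (intro exI allI impI)
    fix n assume n: "n \<ge> N"
    define M where "M = n div Q"
    define f where "f = (\<lambda>n. real (cnt (\<lambda>i. x i = 0) n) / real n)"
    have nQ: "n \<ge> Q" using n unfolding N_def by simp
    have "Q div Q \<le> n div Q" by (rule div_le_mono[OF nQ])
    then have M1: "M \<ge> 1" using Q0 unfolding M_def by simp
    have a1: "\<bar>f n - f (Q * M)\<bar> \<le> 2 * real Q / real n"
      using cnt_block_approx[OF Q0 nQ] unfolding f_def M_def by simp
    have "real n > 4 * real Q / e" using N0 n unfolding N_def by simp
    then have "real n * e > 4 * real Q" using e by (simp add: field_simps)
    then have a2: "2 * real Q / real n < e / 2" using e nQ Q0 by (simp add: field_simps)
    define A where "A = real (cnt (\<lambda>i. x i = 0) M)"
    have "real (cnt (\<lambda>i. x i = 0) (Q * M)) = A * real (z k 0) + (real M - A) * real (z k 1)"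
      unfolding Q_def cnt0_block A_def using sum_x01[of "\<lambda>b. real (z k b)" M] by simp
    then have "f (Q * M) - c = (real M - A) * (real (z k 1) - real (z k 0)) / (real Q * real M)"
      unfolding f_def c_def using Q0 M1 by (simp add: field_simps)
    moreover have "\<bar>real M - A\<bar> \<le> real M" unfolding A_def using cnt_le[of _ M] by simp
    ultimately have "\<bar>f (Q * M) - c\<bar> = \<bar>real M - A\<bar> * \<bar>real (z k 1) - real (z k 0)\<bar> / (real Q * real M)"
      using Q0 M1 by (simp add: abs_mult abs_div)
    also have "\<dots> \<le> real M * \<bar>real (z k 1) - real (z k 0)\<bar> / (real Q * real M)"
      by (intro divide_right_mono mult_right_mono) (use \<open>\<bar>real M - A\<bar> \<le> real M\<close> in auto)
    also have "\<dots> = \<bar>real (z k 0) - real (z k 1)\<bar> / real Q" using M1 by (simp add: abs_minus_commute)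
    also have "\<dots> = rho ^ k" unfolding Q_def using zdiff_bound by simp
    finally have a3: "\<bar>f (Q * M) - c\<bar> < e / 2" using k by simp
    show "\<bar>real (cnt (\<lambda>i. x i = 0) n) / real n - c\<bar> < e"
    proof -
      have "\<bar>f n - c\<bar> < e" using a1 a2 a3 by linarith
      then show ?thesis by (simp add: f_def)
    qed
  qed
qed

end

definition wd :: "(nat \<Rightarrow> nat) \<Rightarrow> nat \<Rightarrow> nat \<Rightarrow> nat list" where
  "wd y i L = map y [i..<i+L]"

lemma length_wd[simp]: "length (wd y i L) = L" by (simp add: wd_def)
lemma nth_wd[simp]: "j < L \<Longrightarrow> wd y i L ! j = y (i + j)" by (simp add: wd_def)

context rp begin

definition occ :: "nat list \<Rightarrow> nat \<Rightarrow> nat" where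
  "occ u n = cnt (\<lambda>i. wd x i (length u) = u) n"

definition pi0 where "pi0 = lim (\<lambda>n. real (cnt (\<lambda>i. x i = 0) n) / real n)"

lemma pi0: "(\<lambda>n. real (cnt (\<lambda>i. x i = 0) n) / real n) \<longlonglongrightarrow> pi0"
  unfolding pi0_def using letter_freq_conv by (simp add: convergent_LIMSEQ_iff)

definition cw :: "nat list \<Rightarrow> nat \<Rightarrow> nat \<Rightarrow> nat" where
  "cw u k b = card {r. r < q ^ k \<and> r + length u \<le> q ^ k \<and> map ((!) (S k b)) [r..<r + length u] = u}"

lemma cw_le: "cw u k b \<le> q ^ k"
proof -
  have "{r. r < q ^ k \<and> r + length u \<le> q ^ k \<and> map ((!) (S k b)) [r..<r + length u] = u} \<subseteq> {..<q^k}" by auto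
  then show ?thesis unfolding cw_def by (metis card_lessThan card_mono finite_lessThan)
qed

lemma wd_block:
  assumes "r + L \<le> q ^ k"
  shows "wd x (q ^ k * m + r) L = map ((!) (S k (x m))) [r..<r + L]"
proof (rule nth_equalityI)
  show "length (wd x (q ^ k * m + r) L) = length (map ((!) (S k (x m))) [r..<r + L])" by simp
next
  fix j assume "j < length (wd x (q ^ k * m + r) L)"
  then have j: "j < L" by simp
  have "wd x (q ^ k * m + r) L ! j = x (q ^ k * m + (r + j))" using j by (simp add: add.assoc)
  also have "\<dots> = S k (x m) ! (r + j)" using assms j by (intro x_block) simp
  finally show "wd x (q ^ k * m + r) L ! j = map ((!) (S k (x m))) [r..<r + L] ! j" using j by simp
qed

lemma block_occ:
  shows "cw u k (x m) \<le> card {r. r < q ^ k \<and> wd x (q ^ k * m + r) (length u) = u}"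
    and "card {r. r < q ^ k \<and> wd x (q ^ k * m + r) (length u) = u} \<le> cw u k (x m) + length u"
proof -
  define Q where "Q = q ^ k"
  define L where "L = length u"
  define C where "C = {r. r < Q \<and> r + L \<le> Q \<and> map ((!) (S k (x m))) [r..<r + L] = u}"
  define B where "B = {r. r < Q \<and> wd x (Q * m + r) L = u}"
  have CB: "C \<subseteq> B" unfolding C_def B_def Q_def using wd_block by auto
  have BC: "B \<subseteq> C \<union> {Q - L..<Q}" unfolding C_def B_def Q_def using wd_block by auto
  have cC: "card C = cw u k (x m)" unfolding C_def cw_def Q_def L_def by simp
  show "cw u k (x m) \<le> card {r. r < q ^ k \<and> wd x (q ^ k * m + r) (length u) = u}"
    using card_mono[OF _ CB] cC unfolding B_def Q_def L_def by simp
  have "card B \<le> card (C \<union> {Q - L..<Q})" by (rule card_mono[OF _ BC]) (simp add: C_def)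
  also have "\<dots> \<le> card C + card {Q - L..<Q}" by (rule card_Un_le)
  also have "card {Q - L..<Q} \<le> L" by simp
  finally show "card {r. r < q ^ k \<and> wd x (q ^ k * m + r) (length u) = u} \<le> cw u k (x m) + length u"
    using cC unfolding B_def Q_def L_def by simp
qed

lemma word_freq_conv: "convergent (\<lambda>n. real (occ u n) / real n)"
proof (rule conv_approx)
  fix e :: real assume e: "e > 0"
  define L where "L = length u"
  obtain k0 :: nat where k0: "4 * real L / e < real k0" using reals_Archimedean2 by blast
  define k where "k = k0"
  define Q where "Q = q ^ k"
  have kQ: "real k < real Q" unfolding Q_def using lt_pow[of k] by simp
  have Q0: "Q > 0" unfolding Q_def using q2 by simp
  have LQ: "real L / real Q < e / 4"
  proof -
    have "4 * real L / e < real Q" using k0 kQ unfolding k_def by simp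
    then have "4 * real L < real Q * e" using e by (simp add: field_simps)
    then show ?thesis using Q0 by (simp add: field_simps)
  qed
  obtain M0 where M0: "\<forall>M\<ge>M0. \<bar>real (cnt (\<lambda>i. x i = 0) M) / real M - pi0\<bar> < e / 4"
    using pi0 e unfolding LIMSEQ_def dist_real_def by (meson zero_less_divide_iff zero_less_numeral)
  obtain N0 :: nat where N0: "8 * real Q / e < real N0" using reals_Archimedean2 by blast
  define N where "N = max (Q * (M0 + 1)) N0"
  define c0 where "c0 = real (cw u k 0)"
  define c1 where "c1 = real (cw u k 1)"
  define c where "c = (pi0 * c0 + (1 - pi0) * c1) / real Q"
  show "\<exists>N c. \<forall>n\<ge>N. \<bar>real (occ u n) / real n - c\<bar> < e"
  proof (intro exI allI impI)
    fix n assume n: "n \<ge> N"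
    define M where "M = n div Q"
    define f where "f = (\<lambda>n. real (occ u n) / real n)"
    have nQ: "n \<ge> Q" using n Q0 unfolding N_def by (simp add: le_max_iff_disj)
    have "Q * (M0 + 1) div Q \<le> n div Q" by (rule div_le_mono) (use n in \<open>simp add: N_def\<close>)
    then have MM0: "M \<ge> M0 + 1" using Q0 unfolding M_def by simp
    then have M1: "M \<ge> 1" by simp
    have a1: "\<bar>f n - f (Q * M)\<bar> \<le> 2 * real Q / real n"
      using cnt_block_approx[OF Q0 nQ] unfolding f_def M_def occ_def by simp
    have "real n > 8 * real Q / e" using N0 n unfolding N_def by simp
    then have "real n * e > 8 * real Q" using e by (simp add: field_simps)
    then have a2: "2 * real Q / real n < e / 4" using e nQ Q0 by (simp add: field_simps)
    define A where "A = real (cnt (\<lambda>i. x i = 0) M)"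
    define Sc where "Sc = (\<Sum>m<M. real (cw u k (x m)))"
    have Sc: "Sc = A * c0 + (real M - A) * c1"
      unfolding Sc_def A_def c0_def c1_def using sum_x01[of "\<lambda>b. real (cw u k b)" M] by simp
    have oc: "occ u (Q * M) = (\<Sum>m<M. card {r. r < q ^ k \<and> wd x (q ^ k * m + r) (length u) = u})"
      unfolding occ_def cnt_def Q_def by (rule block_split)
    have lo: "Sc \<le> real (occ u (Q * M))"
      unfolding oc Sc_def of_nat_sum by (intro sum_mono) (use block_occ(1) in auto)
    have hi: "real (occ u (Q * M)) \<le> Sc + real L * real M"
    proof -
      have "real (occ u (Q * M)) \<le> (\<Sum>m<M. real (cw u k (x m)) + real L)"
        unfolding oc of_nat_sum
      proof (intro sum_mono)
        fix m assume "m \<in> {..<M}"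
        have "real (card {r. r < q ^ k \<and> wd x (q ^ k * m + r) (length u) = u}) \<le> real (cw u k (x m) + length u)"
          by (rule of_nat_mono[OF block_occ(2)])
        then show "real (card {r. r < q ^ k \<and> wd x (q ^ k * m + r) (length u) = u}) \<le> real (cw u k (x m)) + real L"
          unfolding L_def by simp
      qed
      also have "\<dots> = Sc + real L * real M" unfolding Sc_def by (simp add: sum.distrib)
      finally show ?thesis .
    qed
    have QM: "real Q * real M > 0" using Q0 M1 by simp
    have b1: "\<bar>f (Q * M) - Sc / (real Q * real M)\<bar> \<le> real L / real Q"
    proof -
      have "\<bar>real (occ u (Q * M)) - Sc\<bar> \<le> real L * real M" using lo hi by simp
      then have "\<bar>real (occ u (Q * M)) - Sc\<bar> / (real Q * real M) \<le> real L * real M / (real Q * real M)"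
        using QM by (intro divide_right_mono) auto
      moreover have "f (Q * M) - Sc / (real Q * real M) = (real (occ u (Q * M)) - Sc) / (real Q * real M)"
        unfolding f_def by (simp add: diff_divide_distrib)
      ultimately show ?thesis using M1 by (simp add: abs_div)
    qed
    have c01: "\<bar>c0 - c1\<bar> \<le> real Q"
    proof -
      have "real (cw u k 0) \<le> real Q" "real (cw u k 1) \<le> real Q"
        unfolding Q_def by (rule of_nat_mono[OF cw_le])+
      then show ?thesis unfolding c0_def c1_def by (simp add: abs_le_iff)
    qed
    have b2: "\<bar>Sc / (real Q * real M) - c\<bar> \<le> \<bar>A / real M - pi0\<bar>"
    proof -
      have "Sc / (real Q * real M) - c = (A / real M - pi0) * (c0 - c1) / real Q"
      proof -
        have "real M > 0" "real Q > 0" using M1 Q0 by auto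
        then show ?thesis unfolding Sc c_def by (simp add: field_simps)
      qed
      then have "\<bar>Sc / (real Q * real M) - c\<bar> = \<bar>A / real M - pi0\<bar> * (\<bar>c0 - c1\<bar> / real Q)"
        by (simp add: abs_mult abs_div)
      also have "\<dots> \<le> \<bar>A / real M - pi0\<bar> * 1"
        using c01 Q0 by (intro mult_left_mono) auto
      finally show ?thesis by simp
    qed
    have b3: "\<bar>A / real M - pi0\<bar> < e / 4" using M0 MM0 unfolding A_def by simp
    have "\<bar>f n - c\<bar> < e" using a1 a2 b1 b2 b3 LQ by linarith
    then show "\<bar>real (occ u n) / real n - c\<bar> < e" by (simp add: f_def)
  qed
qed

definition freq :: "nat list \<Rightarrow> real" where "freq u = lim (\<lambda>n. real (occ u n) / real n)"

lemma freq: "(\<lambda>n. real (occ u n) / real n) \<longlonglongrightarrow> freq u"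
  unfolding freq_def using word_freq_conv by (simp add: convergent_LIMSEQ_iff)

lemma freq_nonneg: "freq u \<ge> 0"
  by (rule LIMSEQ_le_const[OF freq]) auto

end

context rp begin

definition p0 where "p0 = (SOME k. k > 0 \<and> (\<forall>a\<in>{0,1}. \<forall>b\<in>{0,1}. b \<in> set (S k a)))"

lemma p0: "\<forall>a\<in>{0,1}. \<forall>b\<in>{0,1}. b \<in> set (S p0 a)"
proof -
  have "\<exists>k. k > 0 \<and> (\<forall>a\<in>{0,1}. \<forall>b\<in>{0,1}. b \<in> set (S k a))"
    using prim unfolding primitive_subst_def by blast
  then have "p0 > 0 \<and> (\<forall>a\<in>{0,1}. \<forall>b\<in>{0,1}. b \<in> set (S p0 a))"
    unfolding p0_def by (rule someI_ex)
  then show ?thesis by blast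
qed

lemma block_contains:
  assumes a: "a \<in> {0,1}"
  shows "\<exists>P. q ^ (k + p0) * m \<le> P \<and> P + q ^ k \<le> q ^ (k + p0) * (m + 1) \<and> (\<forall>s<q ^ k. x (P + s) = S k a ! s)"
proof -
  have "a \<in> set (S p0 (x m))" using p0 a x01 by blast
  then obtain t where t: "t < q ^ p0" "S p0 (x m) ! t = a"
    using lenS[OF x01[of m], of p0] by (metis in_set_conv_nth)
  define j where "j = q ^ p0 * m + t"
  have xj: "x j = a" unfolding j_def using x_block[OF t(1)] t(2) by simp
  define P where "P = q ^ k * j"
  show ?thesis
  proof (intro exI conjI allI impI)
    show "q ^ (k + p0) * m \<le> P" unfolding P_def j_def by (simp add: power_add algebra_simps)
    have "P + q ^ k = q ^ k * (q ^ p0 * m + (t + 1))" unfolding P_def j_def by (simp add: algebra_simps)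
    also have "\<dots> \<le> q ^ k * (q ^ p0 * m + q ^ p0)" using t(1) by (intro mult_le_mono2) simp
    also have "\<dots> = q ^ (k + p0) * (m + 1)" by (simp add: power_add algebra_simps)
    finally show "P + q ^ k \<le> q ^ (k + p0) * (m + 1)" .
    fix s assume "s < q ^ k"
    then show "x (P + s) = S k a ! s" unfolding P_def using x_block xj by simp
  qed
qed

lemma freq_pos:
  assumes "wd x i0 (length u) = u"
  shows "freq u > 0"
proof -
  define L where "L = length u"
  define k where "k = i0 + L"
  have ik: "i0 + L \<le> q ^ k" using lt_pow[of k] unfolding k_def by simp
  define Q where "Q = q ^ (k + p0)"
  have Q0: "Q > 0" unfolding Q_def using q2 by simp
  have "\<forall>m. \<exists>P. Q * m \<le> P \<and> P + q ^ k \<le> Q * (m + 1) \<and> (\<forall>s<q ^ k. x (P + s) = S k 0 ! s)"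
    using block_contains[of 0 k] unfolding Q_def by simp
  then obtain T where T: "\<And>m. Q * m \<le> T m" "\<And>m. T m + q ^ k \<le> Q * (m + 1)" "\<And>m s. s < q ^ k \<Longrightarrow> x (T m + s) = S k 0 ! s"
    by metis
  have wT: "wd x (T m + i0) L = u" for m
  proof (rule nth_equalityI)
    show "length (wd x (T m + i0) L) = length u" unfolding L_def by simp
  next
    fix j assume "j < length (wd x (T m + i0) L)"
    then have j: "j < L" by simp
    have "wd x (T m + i0) L ! j = x (T m + (i0 + j))" using j by (simp add: add.assoc)
    also have "\<dots> = S k 0 ! (i0 + j)" using T(3) ik j by simp
    also have "\<dots> = x (i0 + j)" using x_prefix[of "i0 + j" k] ik j by simp
    also have "\<dots> = u ! j" using assms j unfolding L_def by (metis nth_wd)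
    finally show "wd x (T m + i0) L ! j = u ! j" .
  qed
  have Tlt: "T m + i0 < Q * (m + 1)" for m
  proof -
    have "i0 < q ^ k" using ik lt_pow[of k] unfolding k_def by simp
    then show ?thesis using T(2)[of m] by simp
  qed
  have occM: "occ u (Q * M) \<ge> M" for M
  proof -
    have inj: "inj_on (\<lambda>m. T m + i0) {..<M}"
    proof (rule inj_onI)
      fix m m' assume "T m + i0 = T m' + i0"
      moreover have "m < m' \<Longrightarrow> T m + i0 < T m' + i0"
      proof -
        assume "m < m'"
        then have "Q * (m + 1) \<le> Q * m'" by (intro mult_le_mono2) simp
        then show ?thesis using Tlt[of m] T(1)[of m'] by simp
      qed
      moreover have "m' < m \<Longrightarrow> T m' + i0 < T m + i0"
      proof -
        assume "m' < m"
        then have "Q * (m' + 1) \<le> Q * m" by (intro mult_le_mono2) simp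
        then show ?thesis using Tlt[of m'] T(1)[of m] by simp
      qed
      ultimately show "m = m'" by (metis less_irrefl nat_neq_iff)
    qed
    have sub: "(\<lambda>m. T m + i0) ` {..<M} \<subseteq> {i. i < Q * M \<and> wd x i (length u) = u}"
    proof
      fix i assume "i \<in> (\<lambda>m. T m + i0) ` {..<M}"
      then obtain m where m: "m < M" "i = T m + i0" by auto
      have "Q * (m + 1) \<le> Q * M" using m by (intro mult_le_mono2) simp
      then show "i \<in> {i. i < Q * M \<and> wd x i (length u) = u}" using m Tlt[of m] wT[of m] unfolding L_def by simp
    qed
    have "M = card ((\<lambda>m. T m + i0) ` {..<M})" using card_image[OF inj] by simp
    also have "\<dots> \<le> card {i. i < Q * M \<and> wd x i (length u) = u}" by (rule card_mono[OF _ sub]) simp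
    finally show ?thesis unfolding occ_def cnt_def .
  qed
  have ev: "\<forall>n\<ge>2 * Q. 1 / (2 * real Q) \<le> real (occ u n) / real n"
  proof (intro allI impI)
    fix n assume n: "n \<ge> 2 * Q"
    define M where "M = n div Q"
    have "Q * M \<le> n" unfolding M_def by simp
    then have "occ u (Q * M) \<le> occ u n" unfolding occ_def using cnt_mono by blast
    then have oM: "real M \<le> real (occ u n)" using occM[of M] by linarith
    have "n < Q * (M + 1)" unfolding M_def using Q0 by (metis add.commute div_mult_mod_eq mod_less_divisor mult.commute nat_add_left_cancel_less mult_Suc_right Suc_eq_plus1 add_Suc)
    then have "real n < real Q * (real M + 1)" by (metis of_nat_1 of_nat_add of_nat_less_iff of_nat_mult)
    then have "real n \<le> real Q * real M + real Q" by (simp add: algebra_simps)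
    moreover have "real n \<ge> 2 * real Q" using n by simp
    ultimately have "real n \<le> 2 * real Q * real M" by simp
    then have "real n / (2 * real Q) \<le> real M" using Q0 by (simp add: field_simps)
    then have "real n / (2 * real Q) \<le> real (occ u n)" using oM by simp
    moreover have "real n > 0" using n Q0 by simp
    ultimately show "1 / (2 * real Q) \<le> real (occ u n) / real n" using Q0 by (simp add: field_simps)
  qed
  have "1 / (2 * real Q) \<le> freq u" by (rule LIMSEQ_le_const[OF freq]) (use ev in blast)
  moreover have "1 / (2 * real Q) > 0" using Q0 by simp
  ultimately show ?thesis by linarith
qed

lemma not_evper: "\<not> (\<exists>p>0. \<exists>N. \<forall>s\<ge>N. x (s + p) = x s)"
proof
  assume "\<exists>p>0. \<exists>N. \<forall>s\<ge>N. x (s + p) = x s"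
  then obtain p N where p: "p > 0" and per: "\<forall>s\<ge>N. x (s + p) = x s" by blast
  obtain y where y: "y \<in> subshift \<zeta>" and ny: "\<not> shift_periodic y" using aper unfolding aperiodic_subst_def by blast
  have "y (i + p) = y i" for i
  proof -
    define w where "w = map y [i..<i + (p + 1)]"
    have "w \<in> subst_lang \<zeta>" using y unfolding subshift_def w_def by blast
    then obtain k a pre suf where a: "a \<in> {0,1}" and ska: "S k a = pre @ w @ suf"
      unfolding subst_lang_def is_factor_def by blast
    obtain P where P: "q ^ (k + p0) * N \<le> P" "\<forall>s<q ^ k. x (P + s) = S k a ! s"
      using block_contains[OF a, of k N] by blast
    have lw: "length w = p + 1" unfolding w_def by simp
    have lS: "length pre + (p + 1) \<le> q ^ k" using lenS[OF a, of k] ska lw by simp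
    have xw: "x (P + length pre + j) = w ! j" if "j \<le> p" for j
    proof -
      have "x (P + (length pre + j)) = S k a ! (length pre + j)" using P(2) lS that by simp
      also have "\<dots> = w ! j" using ska lw that by (simp add: nth_append)
      finally show ?thesis by (simp add: add.assoc)
    qed
    have "1 * N \<le> q ^ (k + p0) * N" using q2 by (intro mult_le_mono1) simp
    then have "N \<le> P + length pre" using P(1) by linarith
    then have "x (P + length pre + p) = x (P + length pre)" using per by simp
    then have "w ! p = w ! 0" using xw[of p] xw[of 0] by simp
    moreover have "w ! j = y (i + j)" if "j \<le> p" for j
      using that unfolding w_def by (subst nth_map) (simp_all del: upt_Suc)
    ultimately show ?thesis by simp
  qed
  then show False using ny p unfolding shift_periodic_def by blast
qed

end

definition Rl :: "nat \<Rightarrow> nat list \<Rightarrow> nat list \<Rightarrow> bool" where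
  "Rl l u v \<longleftrightarrow> u ! 0 \<noteq> v ! 0 \<and> u ! (l + 1) \<noteq> v ! (l + 1) \<and> (\<forall>k<l. u ! (k + 1) = v ! (k + 1))"

definition Wset :: "nat \<Rightarrow> nat list set" where
  "Wset L = {u. set u \<subseteq> {0,1} \<and> length u = L}"

lemma finite_Wset: "finite (Wset L)"
  unfolding Wset_def by (rule finite_lists_length_eq) simp

lemma tendsto_if_const: "f \<longlonglongrightarrow> (L::real) \<Longrightarrow> (\<lambda>n. if c then f n else 0) \<longlonglongrightarrow> (if c then L else 0)"
  by (cases c) auto

lemma cnt_Suc: "cnt P (Suc N) = cnt P N + (if P N then 1 else 0)"
proof -
  have "{i. i < Suc N \<and> P i} = {i. i < N \<and> P i} \<union> (if P N then {N} else {})" by (auto simp: less_Suc_eq)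
  then show ?thesis unfolding cnt_def by (simp add: card_insert_if)
qed

context rp begin

lemma wd_W: "wd x a L \<in> Wset L"
proof -
  have "set (wd x a L) \<subseteq> {0,1}"
  proof
    fix c assume "c \<in> set (wd x a L)"
    then obtain i where "c = x i" by (auto simp: wd_def)
    then show "c \<in> {0,1}" using x01[of i] by simp
  qed
  then show ?thesis unfolding Wset_def by simp
qed

lemma sum_windows:
  fixes g :: "nat list \<Rightarrow> real"
  shows "(\<Sum>a<N. g (wd x a L)) = (\<Sum>u\<in>Wset L. real (cnt (\<lambda>i. wd x i L = u) N) * g u)"
proof (induction N)
  case 0 then show ?case by (simp add: cnt_def)
next
  case (Suc N)
  have "(\<Sum>u\<in>Wset L. real (cnt (\<lambda>i. wd x i L = u) (Suc N)) * g u)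
      = (\<Sum>u\<in>Wset L. real (cnt (\<lambda>i. wd x i L = u) N) * g u) + (\<Sum>u\<in>Wset L. if wd x N L = u then g u else 0)"
  proof -
    have "real (cnt (\<lambda>i. wd x i L = u) (Suc N)) * g u = real (cnt (\<lambda>i. wd x i L = u) N) * g u + (if wd x N L = u then g u else 0)" for u
      unfolding cnt_Suc by (simp add: algebra_simps)
    then show ?thesis by (simp add: sum.distrib)
  qed
  also have "(\<Sum>u\<in>Wset L. if wd x N L = u then g u else 0) = g (wd x N L)"
    using sum.delta[OF finite_Wset, of "wd x N L" g] wd_W by (simp add: eq_commute)
  finally show ?case using Suc by simp
qed

lemma occ_W: "u \<in> Wset L \<Longrightarrow> cnt (\<lambda>i. wd x i L = u) N = occ u N"
  unfolding occ_def Wset_def by simp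

definition Fn :: "nat \<Rightarrow> nat \<Rightarrow> real" where
  "Fn l N = (\<Sum>u\<in>Wset (l+2). \<Sum>v\<in>Wset (l+2). if Rl l u v then real (occ u N) * real (occ v N) else 0)"

definition DK :: "nat \<Rightarrow> real" where
  "DK l = (\<Sum>u\<in>Wset (l+2). \<Sum>v\<in>Wset (l+2). if Rl l u v then freq u * freq v else 0)"

lemma card_pairs:
  "real (card {(a,b). a < N \<and> b < N \<and> Rl l (wd x a (l+2)) (wd x b (l+2))}) = Fn l N"
proof -
  define W where "W = Wset (l+2)"
  define I where "I = (\<lambda>u v. if Rl l u v then (1::real) else 0)"
  have "{(a,b). a < N \<and> b < N \<and> Rl l (wd x a (l+2)) (wd x b (l+2))} = Sigma {..<N} (\<lambda>a. {b\<in>{..<N}. Rl l (wd x a (l+2)) (wd x b (l+2))})"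
    by auto
  then have "real (card {(a,b). a < N \<and> b < N \<and> Rl l (wd x a (l+2)) (wd x b (l+2))})
     = (\<Sum>a<N. real (card {b\<in>{..<N}. Rl l (wd x a (l+2)) (wd x b (l+2))}))"
    by (simp add: card_SigmaI)
  also have "\<dots> = (\<Sum>a<N. \<Sum>b<N. I (wd x a (l+2)) (wd x b (l+2)))"
  proof (rule sum.cong)
    fix a assume "a \<in> {..<N}"
    have "real (card {b\<in>{..<N}. Rl l (wd x a (l+2)) (wd x b (l+2))}) = (\<Sum>b\<in>{b\<in>{..<N}. Rl l (wd x a (l+2)) (wd x b (l+2))}. 1)"
      by simp
    also have "\<dots> = (\<Sum>b<N. I (wd x a (l+2)) (wd x b (l+2)))"
      unfolding I_def by (rule sum.inter_filter) simp
    finally show "real (card {b\<in>{..<N}. Rl l (wd x a (l+2)) (wd x b (l+2))}) = (\<Sum>b<N. I (wd x a (l+2)) (wd x b (l+2)))" .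
  qed simp
  also have "\<dots> = (\<Sum>a<N. \<Sum>v\<in>W. real (occ v N) * I (wd x a (l+2)) v)"
    unfolding W_def
    by (rule sum.cong[OF refl], subst sum_windows) (rule sum.cong[OF refl], simp add: occ_W)
  also have "\<dots> = (\<Sum>v\<in>W. real (occ v N) * (\<Sum>a<N. I (wd x a (l+2)) v))"
    by (subst sum.swap) (simp add: sum_distrib_left)
  also have "\<dots> = (\<Sum>v\<in>W. real (occ v N) * (\<Sum>u\<in>W. real (occ u N) * I u v))"
    unfolding W_def by (rule sum.cong[OF refl], subst sum_windows) (simp add: occ_W cong: sum.cong)
  also have "\<dots> = Fn l N"
    unfolding Fn_def W_def I_def by (subst sum.swap) (simp add: sum_distrib_left, intro sum.cong refl, simp)
  finally show ?thesis .
qed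

lemma inner_iff:
  assumes "l \<ge> 1" "0 < i" "0 < j"
  shows "inner_line x i j l \<longleftrightarrow> Rl l (wd x (i-1) (l+2)) (wd x (j-1) (l+2))"
proof -
  have e1: "wd x (i-1) (l+2) ! 0 = x (i-1)" "wd x (j-1) (l+2) ! 0 = x (j-1)" by simp_all
  have e2: "wd x (i-1) (l+2) ! (l+1) = x (i+l)" "wd x (j-1) (l+2) ! (l+1) = x (j+l)" using assms by simp_all
  have e3: "k < l \<Longrightarrow> wd x (i-1) (l+2) ! (k+1) = x (i+k) \<and> wd x (j-1) (l+2) ! (k+1) = x (j+k)" for k
    using assms by simp
  show ?thesis unfolding inner_line_def Rl_def e1 e2 using e3 assms by auto
qed

lemma K_card: "l \<ge> 1 \<Longrightarrow> real (card (K_set x l \<inter> ({..<n} \<times> {..<n}))) = Fn l (n - 1)"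
proof -
  assume l: "l \<ge> 1"
  define B where "B = {(a,b). a < n - 1 \<and> b < n - 1 \<and> Rl l (wd x a (l+2)) (wd x b (l+2))}"
  have eq: "K_set x l \<inter> ({..<n} \<times> {..<n}) = (\<lambda>(a,b). (Suc a, Suc b)) ` B"
  proof (rule set_eqI, rule iffI)
    fix p assume p: "p \<in> K_set x l \<inter> ({..<n} \<times> {..<n})"
    then obtain i j where ij: "p = (i,j)" "inner_line x i j l" "i < n" "j < n" unfolding K_set_def by auto
    then have ij0: "0 < i" "0 < j" unfolding inner_line_def by auto
    then have "(i-1, j-1) \<in> B" unfolding B_def using ij inner_iff[OF l ij0] by auto
    moreover have "p = (\<lambda>(a,b). (Suc a, Suc b)) (i-1, j-1)" using ij ij0 by simp
    ultimately show "p \<in> (\<lambda>(a,b). (Suc a, Suc b)) ` B" by blast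
  next
    fix p assume "p \<in> (\<lambda>(a,b). (Suc a, Suc b)) ` B"
    then obtain a b where ab: "p = (Suc a, Suc b)" "a < n - 1" "b < n - 1" "Rl l (wd x a (l+2)) (wd x b (l+2))"
      unfolding B_def by auto
    then have "inner_line x (Suc a) (Suc b) l" using inner_iff[OF l, of "Suc a" "Suc b"] by simp
    then show "p \<in> K_set x l \<inter> ({..<n} \<times> {..<n})" using ab unfolding K_set_def by auto
  qed
  have "card ((\<lambda>(a,b). (Suc a, Suc b)) ` B) = card B" by (rule card_image) (auto simp: inj_on_def)
  then show ?thesis unfolding eq B_def using card_pairs by simp
qed

lemma occ_shift: "(\<lambda>n. real (occ u (n - 1)) / real n) \<longlonglongrightarrow> freq u"
proof -
  have "(\<lambda>m. real (occ u m) / real m * (real m / real (Suc m))) \<longlonglongrightarrow> freq u * 1"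
    by (intro tendsto_mult freq LIMSEQ_n_over_Suc_n)
  moreover have "real (occ u m) / real m * (real m / real (Suc m)) = real (occ u (Suc m - 1)) / real (Suc m)" for m
    by (cases "m = 0") (simp_all add: occ_def cnt_def)
  ultimately have "(\<lambda>m. real (occ u (Suc m - 1)) / real (Suc m)) \<longlonglongrightarrow> freq u" by simp
  then show ?thesis by (rule LIMSEQ_imp_Suc)
qed

lemma K_dens: "l \<ge> 1 \<Longrightarrow> (\<lambda>n. real (card (K_set x l \<inter> ({..<n} \<times> {..<n}))) / real n ^ 2) \<longlonglongrightarrow> DK l"
proof -
  assume l: "l \<ge> 1"
  have eq: "real (card (K_set x l \<inter> ({..<n} \<times> {..<n}))) / real n ^ 2
     = (\<Sum>u\<in>Wset (l+2). \<Sum>v\<in>Wset (l+2). if Rl l u v then (real (occ u (n-1)) / real n) * (real (occ v (n-1)) / real n) else 0)" for n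
    unfolding K_card[OF l] Fn_def by (simp add: sum_divide_distrib power2_eq_square, intro sum.cong refl, simp)
  show ?thesis unfolding eq DK_def
    by (intro tendsto_sum tendsto_if_const tendsto_mult occ_shift)
qed

lemma density_K: "l \<ge> 1 \<Longrightarrow> density2 (K_set x l) = DK l"
  unfolding density2_def using K_dens by (simp add: limI)

lemma DK_nonneg: "DK l \<ge> 0"
  unfolding DK_def by (intro sum_nonneg) (simp add: freq_nonneg)

end

context rp begin

lemma lines_finite: "finite {(i,j). rp_line x n i j l}"
proof -
  have "{(i,j). rp_line x n i j l} \<subseteq> {..n} \<times> {..n}" unfolding rp_line_def by auto
  then show ?thesis by (rule finite_subset) simp
qed

lemma card_bd1: "card {(i,j). i < n \<and> j < n \<and> (i = 0 \<or> j = 0 \<or> i = c \<or> j = c)} \<le> 4 * n"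
proof -
  have "{(i,j). i < n \<and> j < n \<and> (i = 0 \<or> j = 0 \<or> i = c \<or> j = c)} \<subseteq>
    (({0} \<times> {..<n}) \<union> ({..<n} \<times> {0})) \<union> (({c} \<times> {..<n}) \<union> ({..<n} \<times> {c}))" by auto
  then have "card {(i,j). i < n \<and> j < n \<and> (i = 0 \<or> j = 0 \<or> i = c \<or> j = c)} \<le> card ((({0} \<times> {..<n}) \<union> ({..<n} \<times> {0})) \<union> (({c} \<times> {..<n}) \<union> ({..<n} \<times> {c})))"
    by (rule card_mono[rotated]) simp
  also have "\<dots> \<le> card (({0} \<times> {..<n}) \<union> ({..<n} \<times> {0})) + card (({c} \<times> {..<n}) \<union> ({..<n} \<times> {c}))" by (rule card_Un_le)
  also have "card (({0} \<times> {..<n}) \<union> ({..<n} \<times> {0})) \<le> n + n"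
    using card_Un_le[of "{0::nat} \<times> {..<n}" "{..<n} \<times> {0::nat}"] by (simp add: card_cartesian_product)
  also have "card (({c} \<times> {..<n}) \<union> ({..<n} \<times> {c})) \<le> n + n"
    using card_Un_le[of "{c::nat} \<times> {..<n}" "{..<n} \<times> {c::nat}"] by (simp add: card_cartesian_product)
  finally show ?thesis by simp
qed

lemma card_bd2: "card {(i,j). i < n \<and> j < n \<and> (c < i \<or> c < j)} \<le> 2 * (n - Suc c) * n"
proof -
  have "{(i,j). i < n \<and> j < n \<and> (c < i \<or> c < j)} \<subseteq> ({c<..<n} \<times> {..<n}) \<union> ({..<n} \<times> {c<..<n})" by auto
  then have "card {(i,j). i < n \<and> j < n \<and> (c < i \<or> c < j)} \<le> card (({c<..<n} \<times> {..<n}) \<union> ({..<n} \<times> {c<..<n}))"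
    by (rule card_mono[rotated]) simp
  also have "\<dots> \<le> card ({c<..<n} \<times> {..<n}) + card ({..<n} \<times> {c<..<n})" by (rule card_Un_le)
  also have "\<dots> = (n - Suc c) * n + (n - Suc c) * n" by (simp add: card_cartesian_product mult.commute)
  also have "\<dots> = 2 * (n - Suc c) * n" by simp
  finally show ?thesis .
qed

lemma lines_vs_K:
  assumes l: "l \<ge> 1"
  shows "num_lines x n l \<le> card (K_set x l \<inter> ({..<n} \<times> {..<n})) + 4 * n"
    and "card (K_set x l \<inter> ({..<n} \<times> {..<n})) \<le> num_lines x n l + 2 * l * n"
proof -
  define Ls where "Ls = {(i,j). rp_line x n i j l}"
  define Kn where "Kn = K_set x l \<inter> ({..<n} \<times> {..<n})"
  define C where "C = {(i,j). (i,j) \<in> Kn \<and> i \<le> n - l \<and> j \<le> n - l}"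
  define B1 where "B1 = {(i,j). i < n \<and> j < n \<and> (i = 0 \<or> j = 0 \<or> i = n - l \<or> j = n - l)}"
  define B2 where "B2 = {(i,j). i < n \<and> j < n \<and> (n - l < i \<or> n - l < j)}"
  have fK: "finite Kn" unfolding Kn_def by (rule finite_subset[of _ "{..<n} \<times> {..<n}"]) auto
  have CL: "C \<subseteq> Ls"
  proof
    fix p assume "p \<in> C"
    then obtain i j where p: "p = (i,j)" "inner_line x i j l" "i < n" "j < n" "i \<le> n - l" "j \<le> n - l"
      unfolding C_def Kn_def K_set_def by auto
    have I: "1 \<le> l" "0 < i" "0 < j" "i \<noteq> j" "\<forall>k<l. x (i + k) = x (j + k)" "x (i - 1) \<noteq> x (j - 1)" "x (i + l) \<noteq> x (j + l)"
      using p(2) unfolding inner_line_def by blast+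
    have "l \<le> n" using I(2) p(5) by linarith
    then have "rp_line x n i j l" unfolding rp_line_def using I p(5,6) by blast
    then show "p \<in> Ls" using p unfolding Ls_def by simp
  qed
  have LC: "Ls \<subseteq> C \<union> B1"
  proof
    fix p assume "p \<in> Ls"
    then obtain i j where p: "p = (i,j)" "rp_line x n i j l" unfolding Ls_def by auto
    have R: "1 \<le> l" "l \<le> n" "i \<le> n - l" "j \<le> n - l" "i \<noteq> j" "\<forall>k<l. x (i + k) = x (j + k)"
      "0 < min i j \<longrightarrow> x (i - 1) \<noteq> x (j - 1)" "max i j < n - l \<longrightarrow> x (i + l) \<noteq> x (j + l)"
      using p(2) unfolding rp_line_def by blast+
    have ij: "i < n" "j < n" using R(1-4) by linarith+
    show "p \<in> C \<union> B1"
    proof (cases "i = 0 \<or> j = 0 \<or> i = n - l \<or> j = n - l")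
      case True then show ?thesis using p(1) ij unfolding B1_def by blast
    next
      case False
      then have "0 < min i j" "max i j < n - l" using R(3,4) by auto
      then have "inner_line x i j l" unfolding inner_line_def using R False by auto
      then have "(i,j) \<in> C" using ij R(3,4) unfolding C_def Kn_def K_set_def by blast
      then show ?thesis using p(1) by blast
    qed
  qed
  have KC: "Kn \<subseteq> C \<union> B2" unfolding Kn_def C_def B2_def by auto
  have fC: "finite C" unfolding C_def by (rule finite_subset[OF _ fK]) auto
  have fB1: "finite B1" unfolding B1_def by (rule finite_subset[of _ "{..<n} \<times> {..<n}"]) auto
  have fB2: "finite B2" unfolding B2_def by (rule finite_subset[of _ "{..<n} \<times> {..<n}"]) auto
  have fL: "finite Ls" unfolding Ls_def by (rule lines_finite)
  have "card Ls \<le> card (C \<union> B1)" by (rule card_mono[OF _ LC]) (use fC fB1 in simp)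
  also have "\<dots> \<le> card C + card B1" by (rule card_Un_le)
  also have "card C \<le> card Kn" by (rule card_mono[OF fK]) (auto simp: C_def)
  also have "card B1 \<le> 4 * n" unfolding B1_def by (rule card_bd1)
  finally show "num_lines x n l \<le> card (K_set x l \<inter> ({..<n} \<times> {..<n})) + 4 * n"
    unfolding num_lines_def Ls_def Kn_def by simp
  have "card Kn \<le> card (C \<union> B2)" by (rule card_mono[OF _ KC]) (use fC fB2 in simp)
  also have "\<dots> \<le> card C + card B2" by (rule card_Un_le)
  also have "card C \<le> card Ls" by (rule card_mono[OF fL CL])
  also have "card B2 \<le> 2 * (n - Suc (n - l)) * n" unfolding B2_def by (rule card_bd2)
  also have "2 * (n - Suc (n - l)) * n \<le> 2 * l * n" by (intro mult_le_mono1) simp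
  finally show "card (K_set x l \<inter> ({..<n} \<times> {..<n})) \<le> num_lines x n l + 2 * l * n"
    unfolding num_lines_def Ls_def Kn_def by simp
qed

lemma rp_lambda_lim: "l \<ge> 1 \<Longrightarrow> (\<lambda>n. rp_lambda x l n) \<longlonglongrightarrow> DK l"
proof -
  assume l: "l \<ge> 1"
  define kn where "kn = (\<lambda>n. real (card (K_set x l \<inter> ({..<n} \<times> {..<n}))))"
  have t1: "(\<lambda>n. kn n / real n ^ 2 * (real n ^ 2 / (real n ^ 2 - real n))) \<longlonglongrightarrow> DK l * 1"
    by (intro tendsto_mult) (use K_dens[OF l] in \<open>simp add: kn_def\<close>, real_asymp)
  have e1: "\<forall>\<^sub>F n in sequentially. kn n / real n ^ 2 * (real n ^ 2 / (real n ^ 2 - real n)) = kn n / (real n ^ 2 - real n)"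
    by (rule eventually_mono[OF eventually_ge_at_top[of 2]]) (simp add: field_simps)
  have t2: "(\<lambda>n. kn n / (real n ^ 2 - real n)) \<longlonglongrightarrow> DK l"
    by (rule Lim_transform_eventually[OF t1[unfolded mult_1_right] e1])
  have t3: "(\<lambda>n. (4 + 2 * real l) * real n / (real n ^ 2 - real n)) \<longlonglongrightarrow> 0" by real_asymp
  have bnd: "\<forall>\<^sub>F n in sequentially. \<bar>rp_lambda x l n - kn n / (real n ^ 2 - real n)\<bar> \<le> (4 + 2 * real l) * real n / (real n ^ 2 - real n)"
  proof (rule eventually_mono[OF eventually_ge_at_top[of 2]])
    fix n :: nat assume n: "n \<ge> 2"
    have pos: "real n ^ 2 - real n > 0"
    proof -
      have "real n * real n > real n * 1" using n by (intro mult_strict_left_mono) auto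
      then show ?thesis by (simp add: power2_eq_square)
    qed
    have "real (num_lines x n l) \<le> kn n + 4 * real n" "kn n \<le> real (num_lines x n l) + 2 * real l * real n"
    proof -
      have h1: "real (num_lines x n l) \<le> real (card (K_set x l \<inter> ({..<n} \<times> {..<n})) + 4 * n)"
        by (rule of_nat_mono[OF lines_vs_K(1)[OF l]])
      have h2: "real (card (K_set x l \<inter> ({..<n} \<times> {..<n}))) \<le> real (num_lines x n l + 2 * l * n)"
        by (rule of_nat_mono[OF lines_vs_K(2)[OF l]])
      show "real (num_lines x n l) \<le> kn n + 4 * real n" using h1 unfolding kn_def by simp
      show "kn n \<le> real (num_lines x n l) + 2 * real l * real n" using h2 unfolding kn_def by simp
    qed
    then have "\<bar>real (num_lines x n l) - kn n\<bar> \<le> (4 + 2 * real l) * real n"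
    proof -
      have "0 \<le> real l * real n" by simp
      moreover have "(4 + 2 * real l) * real n = 4 * real n + 2 * (real l * real n)" by (simp add: algebra_simps)
      ultimately show ?thesis using \<open>real (num_lines x n l) \<le> kn n + 4 * real n\<close> \<open>kn n \<le> real (num_lines x n l) + 2 * real l * real n\<close>
        unfolding abs_le_iff by linarith
    qed
    then have "\<bar>real (num_lines x n l) - kn n\<bar> / (real n ^ 2 - real n) \<le> (4 + 2 * real l) * real n / (real n ^ 2 - real n)"
      using pos by (intro divide_right_mono) auto
    moreover have "rp_lambda x l n - kn n / (real n ^ 2 - real n) = (real (num_lines x n l) - kn n) / (real n ^ 2 - real n)"
      unfolding rp_lambda_def by (simp add: diff_divide_distrib)
    ultimately show "\<bar>rp_lambda x l n - kn n / (real n ^ 2 - real n)\<bar> \<le> (4 + 2 * real l) * real n / (real n ^ 2 - real n)"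
      using pos by (simp add: abs_div)
  qed
  have "(\<lambda>n. rp_lambda x l n - kn n / (real n ^ 2 - real n)) \<longlonglongrightarrow> 0"
  proof (rule tendsto_sandwich[of "\<lambda>n. - ((4 + 2 * real l) * real n / (real n ^ 2 - real n))" _ _ "\<lambda>n. (4 + 2 * real l) * real n / (real n ^ 2 - real n)"])
    show "\<forall>\<^sub>F n in sequentially. - ((4 + 2 * real l) * real n / (real n ^ 2 - real n)) \<le> rp_lambda x l n - kn n / (real n ^ 2 - real n)"
      using bnd by (rule eventually_mono) (simp add: abs_le_iff)
    show "\<forall>\<^sub>F n in sequentially. rp_lambda x l n - kn n / (real n ^ 2 - real n) \<le> (4 + 2 * real l) * real n / (real n ^ 2 - real n)"
      using bnd by (rule eventually_mono) (simp add: abs_le_iff)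
    show "(\<lambda>n. - ((4 + 2 * real l) * real n / (real n ^ 2 - real n))) \<longlonglongrightarrow> 0" using tendsto_minus[OF t3] by simp
  qed (rule t3)
  from tendsto_add[OF this t2] show ?thesis by simp
qed

end

context rp begin

lemma inj_core:
  assumes L1: "rp_line x n i j m" and L2: "rp_line x n i' j' m'"
    and t: "t < M" "t' < M" "M \<le> m" "M \<le> m'"
    and e: "i + t = i' + t'" "j + t = j' + t'" and tt: "t \<le> t'"
  shows "t = t' \<and> i = i' \<and> j = j' \<and> m = m'"
proof -
  have ttq: "t = t'"
  proof (rule ccontr)
    assume "t \<noteq> t'"
    then have d: "t' - t > 0" using tt by simp
    have ii: "i = i' + (t' - t)" "j = j' + (t' - t)" using e tt by auto
    then have "0 < min i j" using d by simp
    then have ne: "x (i - 1) \<noteq> x (j - 1)" using L1 unfolding rp_line_def by blast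
    have "t' - t - 1 < m'" using t tt by linarith
    then have "x (i' + (t' - t - 1)) = x (j' + (t' - t - 1))" using L2 unfolding rp_line_def by blast
    moreover have "i' + (t' - t - 1) = i - 1" "j' + (t' - t - 1) = j - 1" using ii d by auto
    ultimately show False using ne by simp
  qed
  then have ij: "i = i'" "j = j'" using e by auto
  have A1: "m \<le> n" "i \<le> n - m" "j \<le> n - m" "\<forall>k<m. x (i + k) = x (j + k)"
    "max i j < n - m \<longrightarrow> x (i + m) \<noteq> x (j + m)" using L1 unfolding rp_line_def by blast+
  have B1: "m' \<le> n" "i' \<le> n - m'" "j' \<le> n - m'" "\<forall>k<m'. x (i' + k) = x (j' + k)"
    "max i' j' < n - m' \<longrightarrow> x (i' + m') \<noteq> x (j' + m')" using L2 unfolding rp_line_def by blast+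
  have "m = m'"
  proof (rule ccontr)
    assume "m \<noteq> m'"
    then consider "m < m'" | "m' < m" by linarith
    then show False
    proof cases
      case 1
      have "i < n - m" "j < n - m" using B1(1-3) ij 1 by linarith+
      then have "x (i + m) \<noteq> x (j + m)" using A1(5) by simp
      moreover have "x (i' + m) = x (j' + m)" using B1(4) 1 by blast
      ultimately show False using ij by simp
    next
      case 2
      have "i' < n - m'" "j' < n - m'" using A1(1-3) ij 2 by linarith+
      then have "x (i' + m') \<noteq> x (j' + m')" using B1(5) by simp
      moreover have "x (i + m') = x (j + m')" using A1(4) 2 by blast
      ultimately show False using ij by simp
    qed
  qed
  then show ?thesis using ttq ij by simp
qed

lemma tail_lines:
  assumes M: "M \<ge> 1"
  shows "real M * (\<Sum>m\<in>{M..n}. real (num_lines x n m)) \<le> real n ^ 2"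
proof -
  define Dom where "Dom = (SIGMA m:{M..n}. ({(i,j). rp_line x n i j m} \<times> {..<M}))"
  define f where "f = (\<lambda>(m :: nat, (i :: nat, j :: nat), t :: nat). (i + t, j + t))"
  have cD: "card Dom = (\<Sum>m\<in>{M..n}. num_lines x n m * M)"
    unfolding Dom_def num_lines_def
    by (subst card_SigmaI) (auto simp: card_cartesian_product lines_finite)
  have inj: "inj_on f Dom"
  proof (rule inj_onI)
    fix a b assume a: "a \<in> Dom" and b: "b \<in> Dom" and fab: "f a = f b"
    obtain m i j t where av: "a = (m, (i, j), t)" by (metis prod.collapse)
    obtain m' i' j' t' where bv: "b = (m', (i', j'), t')" by (metis prod.collapse)
    have A: "rp_line x n i j m" "t < M" "M \<le> m" using a av unfolding Dom_def by auto
    have B: "rp_line x n i' j' m'" "t' < M" "M \<le> m'" using b bv unfolding Dom_def by auto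
    have E: "i + t = i' + t'" "j + t = j' + t'" using fab av bv unfolding f_def by auto
    show "a = b"
    proof (cases "t \<le> t'")
      case True
      then show ?thesis using inj_core[OF A(1) B(1) A(2) B(2) A(3) B(3) E True] av bv by simp
    next
      case False
      then have "t' \<le> t" by simp
      then show ?thesis using inj_core[OF B(1) A(1) B(2) A(2) B(3) A(3) E[symmetric]] av bv by simp
    qed
  qed
  have img: "f ` Dom \<subseteq> {..<n} \<times> {..<n}"
  proof
    fix p assume "p \<in> f ` Dom"
    then obtain m i j t where "p = (i + t, j + t)" "rp_line x n i j m" "t < M" "M \<le> m"
      unfolding Dom_def f_def by auto
    then show "p \<in> {..<n} \<times> {..<n}" unfolding rp_line_def by auto
  qed
  have "card Dom = card (f ` Dom)" using card_image[OF inj] by simp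
  also have "\<dots> \<le> card ({..<n} \<times> {..<n})" by (rule card_mono[OF _ img]) simp
  finally have "card Dom \<le> n * n" by (simp add: card_cartesian_product)
  then have "real (card Dom) \<le> real n ^ 2" by (simp add: power2_eq_square of_nat_mono flip: of_nat_mult)
  moreover have "real (card Dom) = real M * (\<Sum>m\<in>{M..n}. real (num_lines x n m))"
    unfolding cD by (simp add: sum_distrib_left mult.commute)
  ultimately show ?thesis by simp
qed

lemma rp_lambda_nonneg: "rp_lambda x m n \<ge> 0"
proof -
  have "real n \<le> real n ^ 2" by (cases n) (auto simp: power2_eq_square)
  then show ?thesis unfolding rp_lambda_def by simp
qed

lemma tail_lambda:
  assumes K: "K \<ge> 1" and n: "n \<ge> 2"
  shows "(\<Sum>m\<in>{K..n}. rp_lambda x m n) \<le> 2 / real K"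
proof -
  have pos: "real n ^ 2 - real n > 0"
  proof -
    have "real n * real n > real n * 1" using n by (intro mult_strict_left_mono) auto
    then show ?thesis by (simp add: power2_eq_square)
  qed
  have "(\<Sum>m\<in>{K..n}. rp_lambda x m n) = (\<Sum>m\<in>{K..n}. real (num_lines x n m)) / (real n ^ 2 - real n)"
    unfolding rp_lambda_def by (simp add: sum_divide_distrib)
  also have "\<dots> \<le> (real n ^ 2 / real K) / (real n ^ 2 - real n)"
  proof (rule divide_right_mono)
    have "real K * (\<Sum>m\<in>{K..n}. real (num_lines x n m)) \<le> real n ^ 2" by (rule tail_lines[OF K])
    then show "(\<Sum>m\<in>{K..n}. real (num_lines x n m)) \<le> real n ^ 2 / real K" using K by (simp add: field_simps)
  qed (use pos in simp)
  also have "\<dots> \<le> 2 / real K"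
  proof -
    have "real n ^ 2 \<le> 2 * (real n ^ 2 - real n)"
    proof -
      have "2 * real n \<le> real n * real n" using n by (intro mult_right_mono) auto
      then show ?thesis by (simp add: power2_eq_square)
    qed
    then show ?thesis using pos K by (simp add: field_simps)
  qed
  finally show ?thesis .
qed

lemma Lambda_split:
  assumes "K + l \<le> n + 1"
  shows "rp_Lambda x l n = (\<Sum>m<K. rp_lambda x (m + l) n) + (\<Sum>m\<in>{K+l..n}. rp_lambda x m n)"
proof -
  have "{l..n} = {l..<K+l} \<union> {K+l..n}" using assms by auto
  then have "rp_Lambda x l n = (\<Sum>m\<in>{l..<K+l}. rp_lambda x m n) + (\<Sum>m\<in>{K+l..n}. rp_lambda x m n)"
    unfolding rp_Lambda_def by (simp add: sum.union_disjoint ivl_disj_int)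
  moreover have "(\<Sum>m\<in>{l..<K+l}. rp_lambda x m n) = (\<Sum>m<K. rp_lambda x (m + l) n)"
    using sum.shift_bounds_nat_ivl[of "\<lambda>m. rp_lambda x m n" 0 l K] by (simp add: atLeast0LessThan)
  ultimately show ?thesis by simp
qed

lemma partial_lim: "l \<ge> 1 \<Longrightarrow> (\<lambda>n. \<Sum>m<K. rp_lambda x (m + l) n) \<longlonglongrightarrow> (\<Sum>m<K. DK (m + l))"
  by (intro tendsto_sum rp_lambda_lim) simp

lemma DK_summable: "l \<ge> 1 \<Longrightarrow> summable (\<lambda>m. DK (m + l))"
proof (rule summableI_nonneg_bounded[where x = 2])
  fix K assume l: "l \<ge> 1"
  show "(\<Sum>m<K. DK (m + l)) \<le> 2"
  proof (rule LIMSEQ_le_const2[OF partial_lim[OF l]], intro exI allI impI)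
    fix n assume n: "n \<ge> K + l + 2"
    have "(\<Sum>m<K. rp_lambda x (m + l) n) \<le> (\<Sum>m<K. rp_lambda x (m + l) n) + (\<Sum>m\<in>{K+l..n}. rp_lambda x m n)"
      by (simp add: sum_nonneg rp_lambda_nonneg)
    also have "\<dots> = rp_Lambda x l n" using Lambda_split[of K l n] n by simp
    also have "\<dots> = (\<Sum>m\<in>{l..n}. rp_lambda x m n)" unfolding rp_Lambda_def ..
    also have "\<dots> \<le> 2 / real l" using tail_lambda[OF l] n by simp
    also have "\<dots> \<le> 2" using l by (simp add: field_simps)
    finally show "(\<Sum>m<K. rp_lambda x (m + l) n) \<le> 2" .
  qed
qed (simp add: DK_nonneg)

lemma Lambda_lim:
  assumes l: "l \<ge> 1"
  shows "(\<lambda>n. rp_Lambda x l n) \<longlonglongrightarrow> (\<Sum>m. DK (m + l))"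
proof (rule LIMSEQ_I)
  fix r :: real assume r: "r > 0"
  define S where "S = (\<Sum>m. DK (m + l))"
  have ps: "(\<lambda>K. \<Sum>m<K. DK (m + l)) \<longlonglongrightarrow> S" unfolding S_def using summable_LIMSEQ[OF DK_summable[OF l]] .
  obtain K1 where K1: "\<forall>K\<ge>K1. \<bar>(\<Sum>m<K. DK (m + l)) - S\<bar> < r / 3"
    using ps r unfolding LIMSEQ_def dist_real_def by (meson zero_less_divide_iff zero_less_numeral)
  obtain K2 :: nat where K2: "6 / r < real K2" using reals_Archimedean2 by blast
  define K where "K = max K1 (K2 + 1)"
  have K1': "\<bar>(\<Sum>m<K. DK (m + l)) - S\<bar> < r / 3" using K1 unfolding K_def by simp
  have Kpos: "K \<ge> 1" unfolding K_def by simp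
  have "6 / r < real K" using K2 unfolding K_def by simp
  then have "6 < real K * r" using r by (simp add: field_simps)
  moreover have "real (K + l) * r = real K * r + real l * r" by (simp add: algebra_simps)
  moreover have "real l * r \<ge> 0" using r by simp
  ultimately have "6 < real (K + l) * r" by linarith
  then have tailK: "2 / real (K + l) < r / 3" using Kpos r by (simp add: field_simps)
  obtain N1 where N1: "\<forall>n\<ge>N1. \<bar>(\<Sum>m<K. rp_lambda x (m + l) n) - (\<Sum>m<K. DK (m + l))\<bar> < r / 3"
    using partial_lim[OF l, of K] r unfolding LIMSEQ_def dist_real_def by (meson zero_less_divide_iff zero_less_numeral)
  show "\<exists>no. \<forall>n\<ge>no. norm (rp_Lambda x l n - S) < r"
  proof (intro exI allI impI)
    fix n assume n: "n \<ge> max N1 (K + l + 2)"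
    have sp: "rp_Lambda x l n = (\<Sum>m<K. rp_lambda x (m + l) n) + (\<Sum>m\<in>{K+l..n}. rp_lambda x m n)"
      using Lambda_split[of K l n] n by simp
    have t0: "(\<Sum>m\<in>{K+l..n}. rp_lambda x m n) \<ge> 0" by (simp add: sum_nonneg rp_lambda_nonneg)
    have t1: "(\<Sum>m\<in>{K+l..n}. rp_lambda x m n) \<le> 2 / real (K + l)"
      using tail_lambda[of "K + l" n] Kpos n by simp
    have a: "\<bar>(\<Sum>m<K. rp_lambda x (m + l) n) - (\<Sum>m<K. DK (m + l))\<bar> < r / 3" using N1 n by simp
    show "norm (rp_Lambda x l n - S) < r" unfolding real_norm_def sp
      using a t0 t1 tailK K1' by linarith
  qed
qed

end

context rp begin

lemma K0: "density2 (K_set x 0) = 0"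
proof -
  have "K_set x 0 = {}" unfolding K_set_def inner_line_def by auto
  then show ?thesis unfolding density2_def by (simp add: limI)
qed

lemma inner_pos:
  assumes il: "inner_line x i j l"
  shows "DK l > 0"
proof -
  have l: "l \<ge> 1" and ij: "0 < i" "0 < j" using il unfolding inner_line_def by auto
  define u where "u = wd x (i-1) (l+2)"
  define v where "v = wd x (j-1) (l+2)"
  have R: "Rl l u v" using inner_iff[OF l ij] il unfolding u_def v_def by simp
  have uW: "u \<in> Wset (l+2)" and vW: "v \<in> Wset (l+2)" unfolding u_def v_def by (rule wd_W)+
  have fu: "freq u > 0" by (rule freq_pos[of "i-1"]) (simp add: u_def)
  have fv: "freq v > 0" by (rule freq_pos[of "j-1"]) (simp add: v_def)
  define F where "F = (\<lambda>u v. if Rl l u v then freq u * freq v else 0)"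
  have Fnn: "F a b \<ge> 0" for a b unfolding F_def by (simp add: freq_nonneg)
  have "F u v \<le> (\<Sum>b\<in>Wset (l+2). F u b)"
    by (rule member_le_sum[OF vW]) (auto simp: Fnn finite_Wset)
  also have "\<dots> \<le> (\<Sum>a\<in>Wset (l+2). \<Sum>b\<in>Wset (l+2). F a b)"
    by (rule member_le_sum[OF uW, where f = "\<lambda>a. \<Sum>b\<in>Wset (l+2). F a b"]) (auto simp: Fnn finite_Wset sum_nonneg)
  also have "\<dots> = DK l" unfolding DK_def F_def ..
  finally show ?thesis using R fu fv unfolding F_def by (smt (verit) mult_pos_pos)
qed

lemma key:
  assumes l0: "l0 \<ge> 1" and H: "\<forall>l\<ge>l0. DK l \<le> 0"
    and i: "i \<ge> 1" and j: "j \<ge> 1" and w: "wd x i l0 = wd x j l0"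
  shows "x (i - 1) = x (j - 1)"
proof (rule ccontr)
  assume ne: "x (i - 1) \<noteq> x (j - 1)"
  then have ij: "i \<noteq> j" by auto
  show False
  proof (cases "\<forall>k. x (i + k) = x (j + k)")
    case True
    have "\<exists>p>0. \<exists>N. \<forall>s\<ge>N. x (s + p) = x s"
    proof (cases "i < j")
      case lt: True
      show ?thesis
      proof (intro exI conjI allI impI)
        show "j - i > 0" using lt by simp
        fix s assume "s \<ge> i"
        then have "s + (j - i) = j + (s - i)" "i + (s - i) = s" using lt by auto
        then show "x (s + (j - i)) = x s" using True[rule_format, of "s - i"] by simp
      qed
    next
      case False
      then have lt: "j < i" using ij by simp
      show ?thesis
      proof (intro exI conjI allI impI)
        show "i - j > 0" using lt by simp
        fix s assume "s \<ge> j"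
        then have "s + (i - j) = i + (s - j)" "j + (s - j) = s" using lt by auto
        then show "x (s + (i - j)) = x s" using True[rule_format, of "s - j"] by simp
      qed
    qed
    then show False using not_evper by blast
  next
    case False
    then have ex: "\<exists>k. x (i + k) \<noteq> x (j + k)" by blast
    define l where "l = (LEAST k. x (i + k) \<noteq> x (j + k))"
    have lne: "x (i + l) \<noteq> x (j + l)" unfolding l_def by (rule LeastI_ex[OF ex])
    have agree: "\<forall>k<l. x (i + k) = x (j + k)" unfolding l_def using not_less_Least by blast
    have "l \<ge> l0"
    proof (rule ccontr)
      assume "\<not> l \<ge> l0"
      then have "l < l0" by simp
      then have "wd x i l0 ! l = wd x j l0 ! l" using w by simp
      then show False using lne \<open>l < l0\<close> by simp
    qed
    then have "inner_line x i j l" unfolding inner_line_def using l0 i j ij ne agree lne by auto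
    then have "DK l > 0" by (rule inner_pos)
    then show False using H \<open>l \<ge> l0\<close> by force
  qed
qed

lemma pigeon_period:
  assumes l0: "l0 \<ge> 1"
    and Kp: "\<And>i j. i \<ge> 1 \<Longrightarrow> j \<ge> 1 \<Longrightarrow> wd x i l0 = wd x j l0 \<Longrightarrow> x (i - 1) = x (j - 1)"
  shows "\<exists>p. 1 \<le> p \<and> p \<le> 2 ^ l0 \<and> (\<forall>s\<le>n. x s = x (s + p))"
proof -
  define D where "D = (2::nat) ^ l0"
  define A where "A = {n+1..n+1+D}"
  define f where "f = (\<lambda>t. wd x t l0)"
  have cW: "card (Wset l0) = D" unfolding Wset_def D_def using card_lists_length_eq[of "{0::nat,1}" l0] by (simp add: numeral_2_eq_2)
  have img: "f ` A \<subseteq> Wset l0" unfolding f_def using wd_W by auto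
  have "card (f ` A) \<le> D" using card_mono[OF finite_Wset img] cW by simp
  moreover have "card A = D + 1" unfolding A_def by simp
  ultimately have "card A > card (f ` A)" by simp
  then have "\<not> inj_on f A" by (rule pigeonhole)
  then obtain a b where ab: "a \<in> A" "b \<in> A" "a \<noteq> b" "f a = f b" unfolding inj_on_def by blast
  obtain a b where ab: "a \<in> A" "b \<in> A" "a < b" "f a = f b"
  proof (cases "a < b")
    case True then show ?thesis using that ab by blast
  next
    case False then show ?thesis using that[of b a] ab by fastforce
  qed
  have bk: "t \<le> a \<Longrightarrow> wd x (a - t) l0 = wd x (b - t) l0" for t
  proof (induction t)
    case 0 then show ?case using ab(4) unfolding f_def by simp
  next
    case (Suc t)
    have IH: "wd x (a - t) l0 = wd x (b - t) l0" using Suc by simp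
    have a1: "a - t \<ge> 1" "b - t \<ge> 1" using Suc.prems ab(3) by auto
    have xe: "x (a - t - 1) = x (b - t - 1)" by (rule Kp[OF a1 IH])
    show ?case
    proof (rule nth_equalityI)
      show "length (wd x (a - Suc t) l0) = length (wd x (b - Suc t) l0)" by simp
    next
      fix k assume "k < length (wd x (a - Suc t) l0)"
      then have k: "k < l0" by simp
      show "wd x (a - Suc t) l0 ! k = wd x (b - Suc t) l0 ! k"
      proof (cases k)
        case 0 then show ?thesis using k xe by simp
      next
        case (Suc k')
        then have k': "k' < l0" using k by simp
        have "wd x (a - t) l0 ! k' = wd x (b - t) l0 ! k'" using IH by simp
        then have "x (a - t + k') = x (b - t + k')" using k' by simp
        moreover have "a - Suc t + k = a - t + k'" "b - Suc t + k = b - t + k'" using Suc a1 by auto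
        ultimately show ?thesis using k by simp
      qed
    qed
  qed
  show ?thesis
  proof (intro exI conjI allI impI)
    show "1 \<le> b - a" using ab(3) by simp
    show "b - a \<le> 2 ^ l0" using ab(1,2) unfolding A_def D_def by auto
    fix s assume s: "s \<le> n"
    have sa: "s \<le> a" using s ab(1) unfolding A_def by simp
    have "wd x (a - (a - s)) l0 = wd x (b - (a - s)) l0" by (rule bk) simp
    moreover have "a - (a - s) = s" "b - (a - s) = s + (b - a)" using sa ab(3) by auto
    ultimately have "wd x s l0 ! 0 = wd x (s + (b - a)) l0 ! 0" by simp
    then show "x s = x (s + (b - a))" using l0 by simp
  qed
qed

lemma infinitely_many: "infinite {l. density2 (K_set x l) > 0}"
proof
  assume fin: "finite {l. density2 (K_set x l) > 0}"
  define F where "F = {l. density2 (K_set x l) > 0}"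
  define l0 where "l0 = Suc (Max (insert 0 F))"
  have l0: "l0 \<ge> 1" unfolding l0_def by simp
  have H: "\<forall>l\<ge>l0. DK l \<le> 0"
  proof (intro allI impI)
    fix l assume l: "l \<ge> l0"
    have "l \<notin> F"
    proof
      assume "l \<in> F"
      then have "l \<le> Max (insert 0 F)" using fin unfolding F_def by simp
      then show False using l unfolding l0_def by simp
    qed
    moreover have "l \<ge> 1" using l l0 by simp
    ultimately show "DK l \<le> 0" unfolding F_def using density_K by force
  qed
  have Kp: "\<And>i j. i \<ge> 1 \<Longrightarrow> j \<ge> 1 \<Longrightarrow> wd x i l0 = wd x j l0 \<Longrightarrow> x (i - 1) = x (j - 1)"
    using key[OF l0 H] by blast
  define D where "D = (2::nat) ^ l0"
  have per: "\<forall>n. \<exists>p. 1 \<le> p \<and> p \<le> D \<and> (\<forall>s\<le>n. x s = x (s + p))"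
    using pigeon_period[OF l0 Kp] unfolding D_def by blast
  have "\<exists>p. 1 \<le> p \<and> p \<le> D \<and> (\<forall>s. x s = x (s + p))"
  proof (rule ccontr)
    assume "\<not> ?thesis"
    then have bad: "\<forall>p\<in>{1..D}. \<exists>s. x s \<noteq> x (s + p)" by auto
    define g where "g = (\<lambda>p. LEAST s. x s \<noteq> x (s + p))"
    have gp: "p \<in> {1..D} \<Longrightarrow> x (g p) \<noteq> x (g p + p)" for p
      unfolding g_def using bad by (metis (mono_tags, lifting) LeastI_ex)
    define B where "B = Max (g ` {1..D})"
    obtain p where p: "1 \<le> p" "p \<le> D" "\<forall>s\<le>B. x s = x (s + p)" using per by blast
    have "g p \<le> B" unfolding B_def using p by simp
    then show False using p(3) gp[of p] p by simp
  qed
  then obtain p where "1 \<le> p" "\<forall>s. x s = x (s + p)" by blast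
  then have "\<exists>p>0. \<exists>N. \<forall>s\<ge>N. x (s + p) = x s" by (metis less_eq_Suc_le One_nat_def)
  then show False using not_evper by blast
qed

end

context rp begin

lemma main:
  "(\<forall>l\<ge>1.
           (\<lambda>n. rp_lambda x l n) \<longlonglongrightarrow> density2 (K_set x l) \<and>
           summable (\<lambda>m. density2 (K_set x (m + l))) \<and>
           (\<lambda>n. rp_Lambda x l n) \<longlonglongrightarrow> (\<Sum>m. density2 (K_set x (m + l))) \<and>
           (\<Sum>m. density2 (K_set x (m + l))) > 0) \<and>
         infinite {l. density2 (K_set x l) > 0}"
proof (intro conjI allI impI)
  show inf: "infinite {l. density2 (K_set x l) > 0}" by (rule infinitely_many)
  fix l :: nat assume l: "l \<ge> 1"
  have eqf: "(\<lambda>m. density2 (K_set x (m + l))) = (\<lambda>m. DK (m + l))"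
    using density_K l by auto
  show "(\<lambda>n. rp_lambda x l n) \<longlonglongrightarrow> density2 (K_set x l)"
    using rp_lambda_lim[OF l] density_K[OF l] by simp
  show "summable (\<lambda>m. density2 (K_set x (m + l)))" unfolding eqf by (rule DK_summable[OF l])
  show "(\<lambda>n. rp_Lambda x l n) \<longlonglongrightarrow> (\<Sum>m. density2 (K_set x (m + l)))" unfolding eqf by (rule Lambda_lim[OF l])
  obtain m where m0: "density2 (K_set x m) > 0" "\<not> m \<le> l"
    using inf unfolding finite_nat_set_iff_bounded_le by blast
  then have m: "m \<ge> l" "density2 (K_set x m) > 0" by auto
  have "DK ((m - l) + l) > 0" using m density_K[of m] l by simp
  then show "(\<Sum>m. density2 (K_set x (m + l))) > 0" unfolding eqf
    by (intro suminf_pos2[OF DK_summable[OF l]]) (auto simp: DK_nonneg)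
qed

end

theorem proposition3p7:
  fixes \<zeta> :: "nat \<Rightarrow> nat list" and q :: nat and x :: "nat \<Rightarrow> nat"
  assumes "binary_const_length \<zeta> q"
    and "primitive_subst \<zeta>"
    and "aperiodic_subst \<zeta>"
    and "\<zeta> 0 ! 0 = 0"
    and "is_fixed_point_limit \<zeta> x"
  shows "(\<forall>l\<ge>1.
           (\<lambda>n. rp_lambda x l n) \<longlonglongrightarrow> density2 (K_set x l) \<and>
           summable (\<lambda>m. density2 (K_set x (m + l))) \<and>
           (\<lambda>n. rp_Lambda x l n) \<longlonglongrightarrow> (\<Sum>m. density2 (K_set x (m + l))) \<and>
           (\<Sum>m. density2 (K_set x (m + l))) > 0) \<and>
         infinite {l. density2 (K_set x l) > 0}"
proof -
  interpret rp \<zeta> q x using assms by unfold_locales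
  show ?thesis by (rule main)
qed

end
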